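(* Let $F\subseteq D$ be as below and let $F_1,\dots,F_{64}$ be the $64$ cosets of $F$ in $D$; let $L_1,\dots,L_8$ be the $8$ cosets of $L$ contained in $N$ (cosets meaning translates $L+v$, $v\in N$). For any integers $i\in\{0,\dots,64\}$, $j\in\{0,\dots,8\}$ with $0<i+j<72$, the characteristic function of the union of any $i$ of the sets $\Omega(F_1),\dots,\Omega(F_{64})$ and any $j$ of the sets $L_1,\dots,L_8$ is a perfect coloring of $\tfrac12 H^{1}_{24}$ with parameters $((20+3i+8j,\,256-3i-8j)(3i+8j,\,276-3i-8j))$.
   Context: $E^n$: binary words of length $n$, a vector space over $\mathrm{GF}(2)$; $\rho$ is Hamming distance. $\tfrac12 H^{1}_{24}$: the graph on odd-weight words of $E^{24}$, adjacent iff at distance exactly $2$. For $X\subset E^{24}$, $\Omega(X)$ is the set of words at distance exactly $1$ from $X$. $C_8$ (resp. $C_8'$) $\subset E^8$ is the linear span of $11111111$ and the seven words obtained from $00101110$ (resp. $01001110$) by cyclically permuting the first seven coordinates. $B\subset E^8$ is the set of even-weight words. $F=\{(x+y,x+z,x+y+z): x\in C_8, y,z\in C_8'\}$ (the extended Golay code, linear, $2^{12}$ words), $D=\{(x+y,x+z,x+y+z): x\in C_8, y,z\in B\}$ (linear, $2^{18}$ words, $F\subset D$), $L=\{(x,y,y+z): x,y\in B, z\in C_8\}$ (linear, $2^{18}$ words), $N=\{(x+00000001,\,y+00000001,\,z+00000001): x,y,z\in B\}$ ($2^{21}$ odd-weight words, a union of $8$ cosets of $L$). Words of $E^{24}$ are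 concatenations of three words of length $8$. For a set $C$, $\chi_C$ is a perfect coloring with parameters $((a,b)(c,d))$ if every vertex of $C$ has exactly $a$ neighbours in $C$ and $b$ outside, and every vertex outside $C$ has exactly $c$ neighbours in $C$ and $d$ outside. *)

theory Defs
  imports Main
begin

text \<open>Binary words of length n are boolean lists of length n; True stands for 1.
  Addition over GF(2) is componentwise exclusive or.\<close>

definition words :: "nat \<Rightarrow> bool list set" where
  "words n = {w. length w = n}"

definition wadd :: "bool list \<Rightarrow> bool list \<Rightarrow> bool list" where
  "wadd a b = map2 (\<noteq>) a b"

definition wt :: "bool list \<Rightarrow> nat" where
  "wt w = length (filter id w)"

definition hdist :: "bool list \<Rightarrow> bool list \<Rightarrow> nat" where
  "hdist a b = card {i. i < length a \<and> a ! i \<noteq> b ! i}"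

definition bw :: "nat list \<Rightarrow> bool list" where
  "bw xs = map (\<lambda>k. k = 1) xs"

inductive_set gf2_span :: "nat \<Rightarrow> bool list set \<Rightarrow> bool list set" for n S where
  zero: "replicate n False \<in> gf2_span n S"
| add: "s \<in> S \<Longrightarrow> a \<in> gf2_span n S \<Longrightarrow> wadd s a \<in> gf2_span n S"

definition cyc7 :: "nat \<Rightarrow> bool list \<Rightarrow> bool list" where
  "cyc7 k w = map (\<lambda>i. if i < 7 then w ! ((i + k) mod 7) else w ! i) [0..<8]"

definition C8 :: "bool list set" where
  "C8 = gf2_span 8 (insert (bw [1,1,1,1,1,1,1,1])
          ((\<lambda>k. cyc7 k (bw [0,0,1,0,1,1,1,0])) ` {0..<7}))"

definition C8' :: "bool list set" where
  "C8' = gf2_span 8 (insert (bw [1,1,1,1,1,1,1,1])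
          ((\<lambda>k. cyc7 k (bw [0,1,0,0,1,1,1,0])) ` {0..<7}))"

definition Bev :: "bool list set" where
  "Bev = {w \<in> words 8. even (wt w)}"

definition Fgolay :: "bool list set" where
  "Fgolay = {wadd x y @ wadd x z @ wadd (wadd x y) z | x y z. x \<in> C8 \<and> y \<in> C8' \<and> z \<in> C8'}"

definition Dcode :: "bool list set" where
  "Dcode = {wadd x y @ wadd x z @ wadd (wadd x y) z | x y z. x \<in> C8 \<and> y \<in> Bev \<and> z \<in> Bev}"

definition Lcode :: "bool list set" where
  "Lcode = {x @ y @ wadd y z | x y z. x \<in> Bev \<and> y \<in> Bev \<and> z \<in> C8}"

definition e8 :: "bool list" where
  "e8 = bw [0,0,0,0,0,0,0,1]"

definition Nset :: "bool list set" where
  "Nset = {wadd x e8 @ wadd y e8 @ wadd z e8 | x y z. x \<in> Bev \<and> y \<in> Bev \<and> z \<in> Bev}"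

definition transl :: "bool list set \<Rightarrow> bool list \<Rightarrow> bool list set" where
  "transl X v = (\<lambda>x. wadd x v) ` X"

definition F_cosets :: "bool list set set" where
  "F_cosets = transl Fgolay ` Dcode"

definition L_cosets :: "bool list set set" where
  "L_cosets = transl Lcode ` Nset"

definition Omega :: "bool list set \<Rightarrow> bool list set" where
  "Omega X = {w \<in> words 24. \<exists>x\<in>X. hdist w x = 1}"

definition HV :: "bool list set" where
  "HV = {w \<in> words 24. odd (wt w)}"

definition Hadj :: "bool list \<Rightarrow> bool list \<Rightarrow> bool" where
  "Hadj u v = (hdist u v = 2)"

definition perfect_coloring ::
  "'a set \<Rightarrow> ('a \<Rightarrow> 'a \<Rightarrow> bool) \<Rightarrow> 'a set \<Rightarrow> nat \<Rightarrow> nat \<Rightarrow> nat \<Rightarrow> nat \<Rightarrow> bool" where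
  "perfect_coloring V E C a b c d \<longleftrightarrow>
     (\<forall>v\<in>V \<inter> C. card {u\<in>V. E v u \<and> u \<in> C} = a \<and> card {u\<in>V. E v u \<and> u \<notin> C} = b) \<and>
     (\<forall>v\<in>V - C. card {u\<in>V. E v u \<and> u \<in> C} = c \<and> card {u\<in>V. E v u \<and> u \<notin> C} = d)"

end

theory Submission
  imports Defs
begin


lemma wadd_len[simp]: "length (wadd a b) = min (length a) (length b)"
  by (simp add: wadd_def)

lemma wadd_nth[simp]: "i < length a \<Longrightarrow> i < length b \<Longrightarrow> wadd a b ! i = (a ! i \<noteq> b ! i)"
  by (simp add: wadd_def)

lemma wadd_assoc: "wadd (wadd a b) c = wadd a (wadd b c)"
  by (rule nth_equalityI) auto

lemma wadd_comm: "wadd a b = wadd b a"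
  by (rule nth_equalityI) auto

lemma wadd_self[simp]: "wadd a a = replicate (length a) False"
  by (rule nth_equalityI) auto

lemma wadd_zero_left[simp]: "length a = n \<Longrightarrow> wadd (replicate n False) a = a"
  by (rule nth_equalityI) auto

lemma wadd_zero_right[simp]: "length a = n \<Longrightarrow> wadd a (replicate n False) = a"
  by (rule nth_equalityI) auto

lemma wadd_cancel_left: "length a = length b \<Longrightarrow> wadd a (wadd a b) = b"
  by (rule nth_equalityI) auto

lemma wadd_append: "length a = length c \<Longrightarrow> wadd (a @ b) (c @ d) = wadd a c @ wadd b d"
  by (simp add: wadd_def)

lemma wadd_eq_zero: "length a = length b \<Longrightarrow> wadd a b = replicate (length a) False \<longleftrightarrow> a = b"
  by (auto simp: list_eq_iff_nth_eq)

definition sd :: "nat set \<Rightarrow> nat set \<Rightarrow> nat set" where "sd A B = (A - B) \<union> (B - A)"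

lemma sd_assoc: "sd (sd A B) C = sd A (sd B C)" by (auto simp: sd_def)
lemma sd_comm: "sd A B = sd B A" by (auto simp: sd_def)
lemma sd_self[simp]: "sd A A = {}" by (auto simp: sd_def)
lemma sd_empty[simp]: "sd A {} = A" "sd {} A = A" by (auto simp: sd_def)
lemma sd_cancel[simp]: "sd A (sd A B) = B" "sd (sd B A) A = B" by (auto simp: sd_def)
lemma sd_mem: "x \<in> sd A B \<longleftrightarrow> (x \<in> A \<longleftrightarrow> x \<notin> B)" by (auto simp: sd_def)
lemma sd_sub: "A \<subseteq> U \<Longrightarrow> B \<subseteq> U \<Longrightarrow> sd A B \<subseteq> U" by (auto simp: sd_def)
lemma sd_finite: "finite A \<Longrightarrow> finite B \<Longrightarrow> finite (sd A B)" by (auto simp: sd_def)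
lemma sd_eq_empty: "sd A B = {} \<longleftrightarrow> A = B" by (auto simp: sd_def)

lemma card_sd: assumes "finite A" "finite B"
  shows "card (sd A B) + 2 * card (A \<inter> B) = card A + card B"
proof -
  have "sd A B = (A \<union> B) - (A \<inter> B)" by (auto simp: sd_def)
  then have "card (sd A B) = card (A \<union> B) - card (A \<inter> B)"
  proof -
    have "A \<inter> B \<subseteq> A \<union> B" by blast
    moreover have "finite (A \<inter> B)" using assms by simp
    ultimately show ?thesis unfolding \<open>sd A B = (A \<union> B) - (A \<inter> B)\<close> by (rule card_Diff_subset[rotated])
  qed
  moreover have "card (A \<union> B) + card (A \<inter> B) = card A + card B"
    using card_Un_Int[OF assms] by simp
  moreover have "card (A \<inter> B) \<le> card (A \<union> B)" using assms by (intro card_mono) auto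
  ultimately show ?thesis by linarith
qed

lemma even_card_sd: "finite A \<Longrightarrow> finite B \<Longrightarrow> even (card (sd A B)) \<longleftrightarrow> (even (card A) \<longleftrightarrow> even (card B))"
  using card_sd[of A B] by (metis dvd_add_left_iff dvd_add_right_iff dvd_triv_left even_add)

lemma card_sd_le: "finite A \<Longrightarrow> finite B \<Longrightarrow> card (sd A B) \<le> card A + card B"
  using card_sd[of A B] by linarith

definition toS :: "bool list \<Rightarrow> nat set" where "toS w = {i. i < length w \<and> w ! i}"

lemma toS_sub: "toS w \<subseteq> {0..<length w}" by (auto simp: toS_def)
lemma toS_finite[simp]: "finite (toS w)" using toS_sub finite_subset by blast

lemma toS_wadd: "length a = length b \<Longrightarrow> toS (wadd a b) = sd (toS a) (toS b)"
  by (auto simp: toS_def sd_def)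

lemma hdist_toS: "length a = length b \<Longrightarrow> hdist a b = card (sd (toS a) (toS b))"
  unfolding hdist_def toS_def sd_def by (rule arg_cong[where f=card]) auto

lemma wt_toS: "wt w = card (toS w)"
  unfolding wt_def toS_def by (simp add: length_filter_conv_card)

definition fromS :: "nat \<Rightarrow> nat set \<Rightarrow> bool list" where "fromS n A = map (\<lambda>i. i \<in> A) [0..<n]"

lemma fromS_len[simp]: "length (fromS n A) = n" by (simp add: fromS_def)
lemma toS_fromS: "toS (fromS n A) = A \<inter> {0..<n}" by (auto simp: fromS_def toS_def)
lemma toS_fromS': "A \<subseteq> {0..<n} \<Longrightarrow> toS (fromS n A) = A" by (auto simp: toS_fromS)
lemma fromS_toS: "fromS (length w) (toS w) = w"
  by (rule nth_equalityI) (auto simp: fromS_def toS_def)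
lemma toS_inj: "length a = length b \<Longrightarrow> toS a = toS b \<Longrightarrow> a = b"
  by (metis fromS_toS)
lemma toS_zero[simp]: "toS (replicate n False) = {}" by (auto simp: toS_def)
lemma toS_empty_iff: "toS a = {} \<longleftrightarrow> a = replicate (length a) False"
  by (auto simp: toS_def list_eq_iff_nth_eq)

lemma wt_wadd_le: "length a = length b \<Longrightarrow> wt (wadd a b) \<le> wt a + wt b"
  by (simp add: wt_toS toS_wadd card_sd_le)

lemma even_wt_wadd: "length a = length b \<Longrightarrow> even (wt (wadd a b)) \<longleftrightarrow> (even (wt a) \<longleftrightarrow> even (wt b))"
  by (simp add: wt_toS toS_wadd even_card_sd)

lemma wt_append[simp]: "wt (a @ b) = wt a + wt b" by (simp add: wt_def)

lemma wt_zero_iff: "wt a = 0 \<longleftrightarrow> a = replicate (length a) False"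
  by (simp add: wt_toS toS_empty_iff[symmetric])

lemma words_finite: "finite (words n)"
proof -
  have "words n = {xs. set xs \<subseteq> (UNIV::bool set) \<and> length xs = n}" by (auto simp: words_def)
  then show ?thesis using finite_lists_length_eq[OF finite_UNIV, of n] by simp
qed



definition genC :: "bool list list" where "genC = [[True, True, True, True, True, True, True, True], [False, False, True, False, True, True, True, False], [False, True, False, True, True, True, False, False], [True, False, True, True, True, False, False, False], [False, True, True, True, False, False, True, False], [True, True, True, False, False, True, False, False], [True, True, False, False, True, False, True, False], [True, False, False, True, False, True, True, False]]"
definition CL :: "bool list list" where "CL = [[False, False, False, False, False, False, False, False], [True, True, True, True, True, True, True, True], [False, False, True, False, True, True, True, False], [True, True, False, True, False, False, False, True], [False, True, False, True, True, True, False, False], [True, False, True, False, False, False, True, True], [False, True, True, True, False, False, True, False], [True, False, False, False, True, True, False, True], [True, False, True, True, True, False, False, False], [False, True, False, False, False, True, True, True], [True, False, False, True, False, True, True, False], [False, True, True, False, True, False, False, True], [True, True, True, False, False, True, False, False], [False, False, False, True, True, False, True, True], [True, True, False, False, True, False, True, False], [False, False, True, True, False, True, False, True]]"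
definition genCp :: "bool list list" where "genCp = [[True, True, True, True, True, True, True, True], [False, True, False, False, True, True, True, False], [True, False, False, True, True, True, False, False], [False, False, True, True, True, False, True, False], [False, True, True, True, False, True, False, False], [True, True, True, False, True, False, False, False], [True, True, False, True, False, False, True, False], [True, False, True, False, False, True, True, False]]"
definition CpL :: "bool list list" where "CpL = [[False, False, False, False, False, False, False, False], [True, True, True, True, True, True, True, True], [False, True, False, False, True, True, True, False], [True, False, True, True, False, False, False, True], [True, False, False, True, True, True, False, False], [False, True, True, False, False, False, True, True], [True, True, False, True, False, False, True, False], [False, False, True, False, True, True, False, True], [False, False, True, True, True, False, True, False], [True, True, False, False, False, True, False, True], [False, True, True, True, False, True, False, False], [True, False, False, False, True, False, True, True], [True, False, True, False, False, True, True, False], [False, True, False, True, True, False, False, True], [True, True, True, False, True, False, False, False], [False, False, False, True, False, True, True, True]]"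
definition HL :: "bool list list" where "HL = [[True, True, True, True, True, True, True, True], [False, False, True, False, True, True, True, False], [False, True, False, True, True, True, False, False], [True, False, True, True, True, False, False, False]]"

lemma genC_eq: "insert (bw [1,1,1,1,1,1,1,1]) ((\<lambda>k. cyc7 k (bw [0,0,1,0,1,1,1,0])) ` {0..<7}) = set genC"
  unfolding atLeastLessThan_upt by code_simp

lemma genCp_eq: "insert (bw [1,1,1,1,1,1,1,1]) ((\<lambda>k. cyc7 k (bw [0,1,0,0,1,1,1,0])) ` {0..<7}) = set genCp"
  unfolding atLeastLessThan_upt by code_simp

fun chk :: "bool list list \<Rightarrow> bool list list \<Rightarrow> bool list list \<Rightarrow> bool" where
  "chk gens acc [] = True"
| "chk gens acc (x#xs) = ((\<exists>g\<in>set gens. \<exists>a\<in>set acc. x = wadd g a) \<and> chk gens (x#acc) xs)"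

lemma chk_span: "set acc \<subseteq> gf2_span n S \<Longrightarrow> set gens \<subseteq> S \<Longrightarrow> chk gens acc xs \<Longrightarrow> set xs \<subseteq> gf2_span n S"
  by (induction gens acc xs rule: chk.induct) (auto intro: gf2_span.intros)

lemma span_sub: "replicate n False \<in> set L \<Longrightarrow> (\<forall>s\<in>S. \<forall>a\<in>set L. wadd s a \<in> set L) \<Longrightarrow> gf2_span n S \<subseteq> set L"
proof
  fix x assume a: "replicate n False \<in> set L" "\<forall>s\<in>S. \<forall>a\<in>set L. wadd s a \<in> set L" and "x \<in> gf2_span n S"
  from this(3) show "x \<in> set L" by (induction rule: gf2_span.induct) (use a in auto)
qed

lemma span_eq: "L = z # xs \<Longrightarrow> z = replicate n False \<Longrightarrow> set gens = S \<Longrightarrow> chk gens [z] xs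
  \<Longrightarrow> list_all (\<lambda>s. list_all (\<lambda>a. wadd s a \<in> set L) L) gens \<Longrightarrow> gf2_span n S = set L"
  apply (rule equalityI)
   apply (rule span_sub; auto simp: list_all_iff)
  using chk_span[of "[z]" n S gens xs] by (auto intro: gf2_span.intros)

lemma C8_eq: "C8 = set CL"
  unfolding C8_def genC_eq
  apply (rule span_eq[where z="replicate 8 False" and gens=genC])
  by (code_simp)+

lemma C8p_eq: "C8' = set CpL"
  unfolding C8'_def genCp_eq
  apply (rule span_eq[where z="replicate 8 False" and gens=genCp])
  by (code_simp)+

definition chkF where "chkF = list_all (\<lambda>x. list_all (\<lambda>y. list_all (\<lambda>z. let w = wadd x y @ wadd x z @ wadd (wadd x y) z in even (wt w) \<and> (wt w = 0 \<or> 8 \<le> wt w)) CpL) CpL) CL"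

lemma chkF: chkF by code_simp

lemma CL_props: "list_all (\<lambda>x. length x = 8 \<and> even (wt x) \<and> wt x \<noteq> 2) CL" by code_simp
lemma CpL_props: "list_all (\<lambda>x. length x = 8 \<and> even (wt x)) CpL" by code_simp
lemma CL_dist: "distinct CL \<and> length CL = 16" by code_simp
lemma CpL_dist: "distinct CpL \<and> length CpL = 16" by code_simp

lemma CL_ker: "set CL = set (filter (\<lambda>z. list_all (\<lambda>h. even (wt (map2 (\<and>) h z))) HL) (List.n_lists 8 [True, False]))"
  by code_simp

definition HL24 :: "bool list list" where
  "HL24 = [replicate 8 True @ replicate 16 False, replicate 8 False @ replicate 8 True @ replicate 8 False]
     @ map (\<lambda>h. replicate 8 False @ h @ h) HL"

definition spair :: "nat \<Rightarrow> nat \<Rightarrow> bool list" where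
  "spair a b = map (\<lambda>h. (h!a) = (h!b)) HL24"

definition pairs :: "(nat \<times> nat) list" where
  "pairs = concat (map (\<lambda>a. map (\<lambda>b. (a,b)) [Suc a..<24]) [0..<24])"

definition SL :: "bool list list" where "SL = [[True, True, True, True, True, True], [True, True, True, True, True, True], [True, True, True, True, True, True], [True, True, True, True, True, True], [True, True, True, True, True, True], [True, True, True, True, True, True], [True, True, True, True, True, True], [False, False, False, True, True, False], [False, False, False, True, False, True], [False, False, False, False, True, False], [False, False, False, True, False, False], [False, False, False, False, False, False], [False, False, False, False, False, True], [False, False, False, False, True, True], [False, False, False, True, True, True], [False, True, False, True, True, False], [False, True, False, True, False, True], [False, True, False, False, True, False], [False, True, False, True, False, False], [False, True, False, False, False, False], [False, True, False, False, False, True], [False, True, False, False, True, True], [False, True, False, True, True, True], [True, True, True, True, True, True], [True, True, True, True, True, True], [True, True, True, True, True, True], [True, True, True, True, True, True], [True, True, True, True, True, True], [True, True, True, True, True, True], [False, False, False, True, True, False], [False, False, False, True, False, True], [False, False, False, False, True, False], [False, False, False, True, False, False], [False, False, False, False, False, False], [False, False, False, False, False, True], [False, False, False, False, True, True], [False, False, False, True, True, True], [False, True, False, True, True, False], [False, True, False, True, False, True], [False, True, False, False, True, False], [False, True, False, True, False, False], [False, True, False, False, False, False], [False, True, False, False, False, True], [False, True, False, False, True, True], [False, True, False, True, True, True], [True, True, True, True, True, True], [True, True, True, True, True, True], [True, True, True, True, True, True], [True, True, True, True, True, True], [True, True, True, True, True, True], [False, False, False, True, True, False], [False, False, False, True,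 False, True], [False, False, False, False, True, False], [False, False, False, True, False, False], [False, False, False, False, False, False], [False, False, False, False, False, True], [False, False, False, False, True, True], [False, False, False, True, True, True], [False, True, False, True, True, False], [False, True, False, True, False, True], [False, True, False, False, True, False], [False, True, False, True, False, False], [False, True, False, False, False, False], [False, True, False, False, False, True], [False, True, False, False, True, True], [False, True, False, True, True, True], [True, True, True, True, True, True], [True, True, True, True, True, True], [True, True, True, True, True, True], [True, True, True, True, True, True], [False, False, False, True, True, False], [False, False, False, True, False, True], [False, False, False, False, True, False], [False, False, False, True, False, False], [False, False, False, False, False, False], [False, False, False, False, False, True], [False, False, False, False, True, True], [False, False, False, True, True, True], [False, True, False, True, True, False], [False, True, False, True, False, True], [False, True, False, False, True, False], [False, True, False, True, False, False], [False, True, False, False, False, False], [False, True, False, False, False, True], [False, True, False, False, True, True], [False, True, False, True, True, True], [True, True, True, True, True, True], [True, True, True, True, True, True], [True, True, True, True, True, True], [False, False, False, True, True, False], [False, False, False, True, False, True], [False, False, False, False, True, False], [False, False, False, True, False, False], [False, False, False, False, False, False], [False, False, False, False, False, True], [False, False, False, False, True, True], [False, False, False, True, True, True], [False, True, False, True, True, False], [False, True, False, True, False, True], [False, True, False, False, True, False], [False, True, False, True, False, False], [False, True, False, False, False, False], [False, True, False, False, False, True], [False, True, False, False, True, True], [False, True, False, True, True, True], [True, True, True, True, True, True], [True, True, True, True, True, True], [False, False, False, True, True, False], [False, False, False, True, False, True], [False, False, False, False, True, False], [False, False, False, True, False, False], [False, False, False, False, False, False], [False, False, False, False, False, True], [False,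 False, False, False, True, True], [False, False, False, True, True, True], [False, True, False, True, True, False], [False, True, False, True, False, True], [False, True, False, False, True, False], [False, True, False, True, False, False], [False, True, False, False, False, False], [False, True, False, False, False, True], [False, True, False, False, True, True], [False, True, False, True, True, True], [True, True, True, True, True, True], [False, False, False, True, True, False], [False, False, False, True, False, True], [False, False, False, False, True, False], [False, False, False, True, False, False], [False, False, False, False, False, False], [False, False, False, False, False, True], [False, False, False, False, True, True], [False, False, False, True, True, True], [False, True, False, True, True, False], [False, True, False, True, False, True], [False, True, False, False, True, False], [False, True, False, True, False, False], [False, True, False, False, False, False], [False, True, False, False, False, True], [False, True, False, False, True, True], [False, True, False, True, True, True], [False, False, False, True, True, False], [False, False, False, True, False, True], [False, False, False, False, True, False], [False, False, False, True, False, False], [False, False, False, False, False, False], [False, False, False, False, False, True], [False, False, False, False, True, True], [False, False, False, True, True, True], [False, True, False, True, True, False], [False, True, False, True, False, True], [False, True, False, False, True, False], [False, True, False, True, False, False], [False, True, False, False, False, False], [False, True, False, False, False, True], [False, True, False, False, True, True], [False, True, False, True, True, True], [True, True, True, True, False, False], [True, True, True, False, True, True], [True, True, True, True, False, True], [True, True, True, False, False, True], [True, True, True, False, False, False], [True, True, True, False, True, False], [True, True, True, True, True, False], [True, False, True, True, True, True], [True, False, True, True, False, False], [True, False, True, False, True, True], [True, False, True, True, False, True], [True, False, True, False, False, True], [True, False, True, False, False, False], [True, False, True, False, True, False], [True, False, True, True, True, False], [True, True, True, False, False, False], [True, True, True, True, True, False], [True, True, True, False, True, False], [True, True, True, False,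 True, True], [True, True, True, False, False, True], [True, True, True, True, False, True], [True, False, True, True, False, False], [True, False, True, True, True, True], [True, False, True, False, False, False], [True, False, True, True, True, False], [True, False, True, False, True, False], [True, False, True, False, True, True], [True, False, True, False, False, True], [True, False, True, True, False, True], [True, True, True, False, False, True], [True, True, True, True, False, True], [True, True, True, True, False, False], [True, True, True, True, True, False], [True, True, True, False, True, False], [True, False, True, False, True, True], [True, False, True, False, False, False], [True, False, True, True, True, True], [True, False, True, False, False, True], [True, False, True, True, False, True], [True, False, True, True, False, False], [True, False, True, True, True, False], [True, False, True, False, True, False], [True, True, True, False, True, True], [True, True, True, False, True, False], [True, True, True, False, False, False], [True, True, True, True, False, False], [True, False, True, True, False, True], [True, False, True, True, True, False], [True, False, True, False, False, True], [True, False, True, True, True, True], [True, False, True, False, True, True], [True, False, True, False, True, False], [True, False, True, False, False, False], [True, False, True, True, False, False], [True, True, True, True, True, False], [True, True, True, True, False, False], [True, True, True, False, False, False], [True, False, True, False, False, True], [True, False, True, False, True, False], [True, False, True, True, False, True], [True, False, True, False, True, True], [True, False, True, True, True, True], [True, False, True, True, True, False], [True, False, True, True, False, False], [True, False, True, False, False, False], [True, True, True, True, False, True], [True, True, True, False, False, True], [True, False, True, False, False, False], [True, False, True, False, True, True], [True, False, True, True, False, False], [True, False, True, False, True, False], [True, False, True, True, True, False], [True, False, True, True, True, True], [True, False, True, True, False, True], [True, False, True, False, False, True], [True, True, True, False, True, True], [True, False, True, False, True, False], [True, False, True, False, False, True], [True, False, True, True, True, False], [True, False, True, False, False, False], [True,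 False, True, True, False, False], [True, False, True, True, False, True], [True, False, True, True, True, True], [True, False, True, False, True, True], [True, False, True, True, True, False], [True, False, True, True, False, True], [True, False, True, False, True, False], [True, False, True, True, False, False], [True, False, True, False, False, False], [True, False, True, False, False, True], [True, False, True, False, True, True], [True, False, True, True, True, True], [True, True, True, True, False, False], [True, True, True, False, True, True], [True, True, True, True, False, True], [True, True, True, False, False, True], [True, True, True, False, False, False], [True, True, True, False, True, False], [True, True, True, True, True, False], [True, True, True, False, False, False], [True, True, True, True, True, False], [True, True, True, False, True, False], [True, True, True, False, True, True], [True, True, True, False, False, True], [True, True, True, True, False, True], [True, True, True, False, False, True], [True, True, True, True, False, True], [True, True, True, True, False, False], [True, True, True, True, True, False], [True, True, True, False, True, False], [True, True, True, False, True, True], [True, True, True, False, True, False], [True, True, True, False, False, False], [True, True, True, True, False, False], [True, True, True, True, True, False], [True, True, True, True, False, False], [True, True, True, False, False, False], [True, True, True, True, False, True], [True, True, True, False, False, True], [True, True, True, False, True, True]]"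

lemma SL_eq: "map (\<lambda>p. spair (fst p) (snd p)) pairs = SL" by code_simp

lemma SL_table: "list_all (\<lambda>t. length (filter (\<lambda>s. s = t) SL) =
   (if t = replicate 6 True then 28 else if t!2 = t!0 then 8 else 0)) (List.n_lists 6 [True, False])"
  by code_simp




lemma C8_props: "x \<in> C8 \<Longrightarrow> length x = 8 \<and> even (wt x) \<and> wt x \<noteq> 2"
  using CL_props by (auto simp: C8_eq list_all_iff)
lemma C8p_props: "x \<in> C8' \<Longrightarrow> length x = 8 \<and> even (wt x)"
  using CpL_props by (auto simp: C8p_eq list_all_iff)

lemma span_closed: assumes "\<And>s. s \<in> S \<Longrightarrow> length s = n" and "\<And>a. a \<in> gf2_span n S \<Longrightarrow> length a = n"
  shows "a \<in> gf2_span n S \<Longrightarrow> b \<in> gf2_span n S \<Longrightarrow> wadd a b \<in> gf2_span n S"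
proof (induction a rule: gf2_span.induct)
  case zero
  then show ?case using assms(2)[of b] by simp
next
  case (add s a)
  then show ?case by (simp add: wadd_assoc gf2_span.add)
qed

lemma C8_closed: "a \<in> C8 \<Longrightarrow> b \<in> C8 \<Longrightarrow> wadd a b \<in> C8"
proof -
  assume a: "a \<in> C8" "b \<in> C8"
  let ?S = "insert (bw [1,1,1,1,1,1,1,1]) ((\<lambda>k. cyc7 k (bw [0,0,1,0,1,1,1,0])) ` {0..<7})"
  have l: "\<And>s. s \<in> ?S \<Longrightarrow> length s = 8" by (auto simp: bw_def cyc7_def)
  have l2: "\<And>a. a \<in> gf2_span 8 ?S \<Longrightarrow> length a = 8" using C8_props unfolding C8_def by blast
  show ?thesis using a span_closed[OF l l2] unfolding C8_def by blast
qed

lemma C8p_closed: "a \<in> C8' \<Longrightarrow> b \<in> C8' \<Longrightarrow> wadd a b \<in> C8'"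
proof -
  assume a: "a \<in> C8'" "b \<in> C8'"
  let ?S = "insert (bw [1,1,1,1,1,1,1,1]) ((\<lambda>k. cyc7 k (bw [0,1,0,0,1,1,1,0])) ` {0..<7})"
  have l: "\<And>s. s \<in> ?S \<Longrightarrow> length s = 8" by (auto simp: bw_def cyc7_def)
  have l2: "\<And>a. a \<in> gf2_span 8 ?S \<Longrightarrow> length a = 8" using C8p_props unfolding C8'_def by blast
  show ?thesis using a span_closed[OF l l2] unfolding C8'_def by blast
qed

lemma C8_zero: "replicate 8 False \<in> C8" unfolding C8_def by (rule gf2_span.zero)
lemma C8p_zero: "replicate 8 False \<in> C8'" unfolding C8'_def by (rule gf2_span.zero)

lemma Bev_closed: "a \<in> Bev \<Longrightarrow> b \<in> Bev \<Longrightarrow> wadd a b \<in> Bev"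
  by (auto simp: Bev_def words_def even_wt_wadd)
lemma Bev_zero: "replicate 8 False \<in> Bev" by (simp add: Bev_def words_def wt_def)
lemma C8_Bev: "C8 \<subseteq> Bev" using C8_props by (auto simp: Bev_def words_def)
lemma C8p_Bev: "C8' \<subseteq> Bev" using C8p_props by (auto simp: Bev_def words_def)
lemma Bev_len: "a \<in> Bev \<Longrightarrow> length a = 8" by (simp add: Bev_def words_def)

definition fg :: "bool list \<Rightarrow> bool list \<Rightarrow> bool list \<Rightarrow> bool list" where
  "fg x y z = wadd x y @ wadd x z @ wadd (wadd x y) z"

lemma fg_len: "length x = 8 \<Longrightarrow> length y = 8 \<Longrightarrow> length z = 8 \<Longrightarrow> length (fg x y z) = 24"
  by (simp add: fg_def)

lemma wadd4: "length x = n \<Longrightarrow> length y = n \<Longrightarrow> length x' = n \<Longrightarrow> length y' = n \<Longrightarrow>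
   wadd (wadd x y) (wadd x' y') = wadd (wadd x x') (wadd y y')"
  by (rule nth_equalityI) auto

lemma fg_add: "length x = 8 \<Longrightarrow> length y = 8 \<Longrightarrow> length z = 8 \<Longrightarrow> length x' = 8 \<Longrightarrow> length y' = 8 \<Longrightarrow> length z' = 8 \<Longrightarrow>
  wadd (fg x y z) (fg x' y' z') = fg (wadd x x') (wadd y y') (wadd z z')"
  unfolding fg_def by (simp add: wadd_append wadd4) (rule nth_equalityI; auto)

lemma Fgolay_alt: "Fgolay = (\<lambda>(x,y,z). fg x y z) ` (C8 \<times> C8' \<times> C8')"
  by (auto simp: Fgolay_def fg_def image_def)
lemma Dcode_alt: "Dcode = (\<lambda>(x,y,z). fg x y z) ` (C8 \<times> Bev \<times> Bev)"
  by (auto simp: Dcode_def fg_def image_def)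

lemma F_len: "w \<in> Fgolay \<Longrightarrow> length w = 24"
  using C8_props C8p_props by (auto simp: Fgolay_alt fg_len)
lemma D_len: "w \<in> Dcode \<Longrightarrow> length w = 24"
  using C8_props by (auto simp: Dcode_alt fg_len Bev_len)

lemma F_closed: "a \<in> Fgolay \<Longrightarrow> b \<in> Fgolay \<Longrightarrow> wadd a b \<in> Fgolay"
proof -
  assume "a \<in> Fgolay" "b \<in> Fgolay"
  then obtain x y z x' y' z' where a: "a = fg x y z" "x \<in> C8" "y \<in> C8'" "z \<in> C8'"
    and b: "b = fg x' y' z'" "x' \<in> C8" "y' \<in> C8'" "z' \<in> C8'" unfolding Fgolay_alt by auto
  have "wadd a b = fg (wadd x x') (wadd y y') (wadd z z')"
    using a b C8_props C8p_props by (simp add: fg_add)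
  then show ?thesis unfolding Fgolay_alt using a b C8_closed C8p_closed
    by (intro image_eqI[where x="(wadd x x', wadd y y', wadd z z')"]) auto
qed
lemma D_closed: "a \<in> Dcode \<Longrightarrow> b \<in> Dcode \<Longrightarrow> wadd a b \<in> Dcode"
proof -
  assume "a \<in> Dcode" "b \<in> Dcode"
  then obtain x y z x' y' z' where a: "a = fg x y z" "x \<in> C8" "y \<in> Bev" "z \<in> Bev"
    and b: "b = fg x' y' z'" "x' \<in> C8" "y' \<in> Bev" "z' \<in> Bev" unfolding Dcode_alt by auto
  have "wadd a b = fg (wadd x x') (wadd y y') (wadd z z')"
    using a b C8_props Bev_len by (simp add: fg_add)
  then show ?thesis unfolding Dcode_alt using a b C8_closed Bev_closed
    by (intro image_eqI[where x="(wadd x x', wadd y y', wadd z z')"]) auto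
qed
lemma F_sub_D: "Fgolay \<subseteq> Dcode"
  unfolding Fgolay_alt Dcode_alt using C8p_Bev by (intro image_mono) auto
lemma F_zero: "replicate 24 False \<in> Fgolay"
proof -
  have "fg (replicate 8 False) (replicate 8 False) (replicate 8 False) = replicate 24 False"
    by (simp add: fg_def eval_nat_numeral)
  then show ?thesis unfolding Fgolay_alt using C8_zero C8p_zero by force
qed

lemma F_wt: "w \<in> Fgolay \<Longrightarrow> even (wt w) \<and> (w = replicate 24 False \<or> 8 \<le> wt w)"
proof -
  assume "w \<in> Fgolay"
  then obtain x y z where xyz: "x \<in> set CL" "y \<in> set CpL" "z \<in> set CpL" and w: "w = fg x y z"
    unfolding Fgolay_alt C8_eq C8p_eq by auto
  have "even (wt w) \<and> (wt w = 0 \<or> 8 \<le> wt w)"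
    using chkF xyz unfolding chkF_def list_all_iff w fg_def Let_def by blast
  moreover have "length w = 24" using \<open>w \<in> Fgolay\<close> F_len by blast
  ultimately show ?thesis using wt_zero_iff[of w] by auto
qed

lemma xrec: "length x = n \<Longrightarrow> length y = n \<Longrightarrow> length z = n \<Longrightarrow>
  wadd (wadd (wadd x y) (wadd x z)) (wadd (wadd x y) z) = x"
  by (rule nth_equalityI) auto

lemma fg_inj: assumes "length x = 8" "length y = 8" "length z = 8" "length x' = 8" "length y' = 8" "length z' = 8"
  and "fg x y z = fg x' y' z'" shows "x = x' \<and> y = y' \<and> z = z'"
proof -
  have b: "wadd x y = wadd x' y'" "wadd x z = wadd x' z'" "wadd (wadd x y) z = wadd (wadd x' y') z'"
    using assms by (auto simp: fg_def)
  have xx: "x = x'" using xrec[of x 8 y z] xrec[of x' 8 y' z'] assms b by simp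
  have c1: "wadd x (wadd x y) = y" "wadd x' (wadd x' y') = y'" "wadd x (wadd x z) = z" "wadd x' (wadd x' z') = z'"
    by (rule wadd_cancel_left; simp add: assms)+
  have "y = y'" using c1(1,2) b(1) xx by metis
  moreover have "z = z'" using c1(3,4) b(2) xx by metis
  ultimately show ?thesis using xx by simp
qed

lemma card_C8: "card C8 = 16" using CL_dist by (simp add: C8_eq distinct_card)
lemma card_C8p: "card C8' = 16" using CpL_dist by (simp add: C8p_eq distinct_card)

lemma F_card: "card Fgolay = 4096"
proof -
  have "inj_on (\<lambda>(x,y,z). fg x y z) (C8 \<times> C8' \<times> C8')"
  proof (rule inj_onI)
    fix p q assume p: "p \<in> C8 \<times> C8' \<times> C8'" and q: "q \<in> C8 \<times> C8' \<times> C8'"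
      and e: "(\<lambda>(x,y,z). fg x y z) p = (\<lambda>(x,y,z). fg x y z) q"
    obtain x y z where px: "p = (x,y,z)" by (cases p) auto
    obtain x' y' z' where qx: "q = (x',y',z')" by (cases q) auto
    have "x = x' \<and> y = y' \<and> z = z'" using p q e C8_props C8p_props unfolding px qx
      by (intro fg_inj) auto
    then show "p = q" using px qx by simp
  qed
  then have "card Fgolay = card (C8 \<times> C8' \<times> C8')" unfolding Fgolay_alt by (rule card_image)
  also have "\<dots> = 4096" by (simp add: card_cartesian_product card_C8 card_C8p)
  finally show ?thesis .
qed

lemma even_wt_cases: "even (wt a) \<Longrightarrow> a = replicate (length a) False \<or> 2 \<le> wt a"
  using wt_zero_iff[of a] by (auto elim!: evenE)

lemma D_small: assumes "d \<in> Dcode" "wt d \<le> 2" shows "d = replicate 24 False"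
proof -
  obtain x y z where d: "d = fg x y z" and xyz: "x \<in> C8" "y \<in> Bev" "z \<in> Bev"
    using assms(1) unfolding Dcode_alt by auto
  have l: "length x = 8" "length y = 8" "length z = 8" using xyz C8_props Bev_len by auto
  have ev: "even (wt x)" "even (wt y)" "even (wt z)" "wt x \<noteq> 2" using xyz C8_props by (auto simp: Bev_def)
  have s: "wt (wadd x y) + wt (wadd x z) + wt (wadd (wadd x y) z) \<le> 2" using assms(2) by (simp add: d fg_def)
  have "wt x \<le> 2"
    using xrec[of x 8 y z] l s wt_wadd_le[of "wadd (wadd x y) (wadd x z)" "wadd (wadd x y) z"]
      wt_wadd_le[of "wadd x y" "wadd x z"] by simp
  then have x0: "x = replicate 8 False" using ev even_wt_cases[of x] l by auto
  have s2: "wt y + wt z + wt (wadd y z) \<le> 2" using s l by (simp add: x0)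
  have ev2: "even (wt (wadd y z))" using ev l even_wt_wadd by simp
  have y0: "y = replicate 8 False"
  proof (rule ccontr)
    assume "y \<noteq> replicate 8 False"
    then have "2 \<le> wt y" using even_wt_cases[of y] ev l by auto
    then have "wt z = 0" "wt (wadd y z) = 0" using s2 ev ev2 by (auto elim!: evenE)
    then have "z = replicate 8 False" "wadd y z = replicate 8 False" using wt_zero_iff l by auto
    then show False using \<open>y \<noteq> _\<close> l by simp
  qed
  have z0: "z = replicate 8 False"
  proof (rule ccontr)
    assume "z \<noteq> replicate 8 False"
    then have "2 \<le> wt z" using even_wt_cases[of z] ev l by auto
    then show False using s2 y0 l by simp
  qed
  show ?thesis using x0 y0 z0 by (simp add: d fg_def eval_nat_numeral)
qed

definition blk1 :: "bool list \<Rightarrow> bool list" where "blk1 u = take 8 u"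
definition blk2 :: "bool list \<Rightarrow> bool list" where "blk2 u = take 8 (drop 8 u)"
definition blk3 :: "bool list \<Rightarrow> bool list" where "blk3 u = drop 16 u"

definition ev3 where "ev3 u \<longleftrightarrow> length u = 24 \<and> even (wt (blk1 u)) \<and> even (wt (blk2 u)) \<and> even (wt (blk3 u))"
definition od3 where "od3 u \<longleftrightarrow> length u = 24 \<and> odd (wt (blk1 u)) \<and> odd (wt (blk2 u)) \<and> odd (wt (blk3 u))"

lemma blk_wadd: "blk1 (wadd a b) = wadd (blk1 a) (blk1 b)" "blk2 (wadd a b) = wadd (blk2 a) (blk2 b)"
  "blk3 (wadd a b) = wadd (blk3 a) (blk3 b)"
  by (simp_all add: blk1_def blk2_def blk3_def wadd_def take_map drop_map take_zip drop_zip)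

lemma blk_app: "length a = 8 \<Longrightarrow> length b = 8 \<Longrightarrow> blk1 (a@b@c) = a \<and> blk2 (a@b@c) = b \<and> blk3 (a@b@c) = c"
  by (simp add: blk1_def blk2_def blk3_def)

lemma blk_len: "length u = 24 \<Longrightarrow> length (blk1 u) = 8 \<and> length (blk2 u) = 8 \<and> length (blk3 u) = 8"
  by (simp add: blk1_def blk2_def blk3_def)

lemma blk_split: "u = blk1 u @ blk2 u @ blk3 u"
  by (simp add: blk1_def blk2_def blk3_def)
    (metis append_take_drop_id drop_drop numeral_Bit0 add.commute)

lemma ev3_ev3: "ev3 a \<Longrightarrow> ev3 b \<Longrightarrow> ev3 (wadd a b)"
  by (simp add: ev3_def blk_wadd even_wt_wadd blk_len)
lemma ev3_od3: "ev3 a \<Longrightarrow> od3 b \<Longrightarrow> od3 (wadd a b)"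
  by (simp add: ev3_def od3_def blk_wadd even_wt_wadd blk_len)
lemma od3_wt: "od3 u \<Longrightarrow> 3 \<le> wt u"
proof -
  assume "od3 u"
  then have "1 \<le> wt (blk1 u)" "1 \<le> wt (blk2 u)" "1 \<le> wt (blk3 u)" unfolding od3_def
    by (auto simp: odd_pos Suc_le_eq)
  moreover have "wt u = wt (blk1 u) + wt (blk2 u) + wt (blk3 u)"
    by (subst blk_split) simp
  ultimately show ?thesis by simp
qed

lemma D_ev3: "d \<in> Dcode \<Longrightarrow> ev3 d"
proof -
  assume "d \<in> Dcode"
  then obtain x y z where d: "d = fg x y z" and xyz: "x \<in> C8" "y \<in> Bev" "z \<in> Bev"
    unfolding Dcode_alt by auto
  have l: "length x = 8" "length y = 8" "length z = 8" using xyz C8_props Bev_len by auto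
  have ev: "even (wt x)" "even (wt y)" "even (wt z)" using xyz C8_props by (auto simp: Bev_def)
  show ?thesis unfolding ev3_def d fg_def using l ev by (simp add: blk_app even_wt_wadd)
qed

lemma L_alt: "u \<in> Lcode \<longleftrightarrow> (\<exists>x y z. u = x @ y @ wadd y z \<and> x \<in> Bev \<and> y \<in> Bev \<and> z \<in> C8)"
  by (auto simp: Lcode_def)

lemma L_ev3: "u \<in> Lcode \<Longrightarrow> ev3 u"
proof -
  assume "u \<in> Lcode"
  then obtain x y z where u: "u = x @ y @ wadd y z" and xyz: "x \<in> Bev" "y \<in> Bev" "z \<in> C8"
    unfolding L_alt by auto
  have l: "length x = 8" "length y = 8" "length z = 8" using xyz C8_props Bev_len by auto
  have ev: "even (wt x)" "even (wt y)" "even (wt z)" using xyz C8_props by (auto simp: Bev_def)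
  show ?thesis unfolding ev3_def u using l ev by (simp add: blk_app even_wt_wadd)
qed

lemma L_len: "u \<in> Lcode \<Longrightarrow> length u = 24" using L_ev3 ev3_def by blast
lemma D_len': "u \<in> Dcode \<Longrightarrow> length u = 24" using D_ev3 ev3_def by blast

lemma L_closed: "a \<in> Lcode \<Longrightarrow> b \<in> Lcode \<Longrightarrow> wadd a b \<in> Lcode"
proof -
  assume "a \<in> Lcode" "b \<in> Lcode"
  then obtain x y z x' y' z' where a: "a = x @ y @ wadd y z" "x \<in> Bev" "y \<in> Bev" "z \<in> C8"
    and b: "b = x' @ y' @ wadd y' z'" "x' \<in> Bev" "y' \<in> Bev" "z' \<in> C8" unfolding L_alt by blast
  have l: "length x = 8" "length y = 8" "length z = 8" "length x' = 8" "length y' = 8" "length z' = 8"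
    using a b C8_props Bev_len by auto
  have "wadd a b = wadd x x' @ wadd y y' @ wadd (wadd y y') (wadd z z')"
    using l by (simp add: a b wadd_append wadd4)
  then show ?thesis unfolding L_alt using a b l by (blast intro: Bev_closed C8_closed)
qed

lemma N_od3: "w \<in> Nset \<Longrightarrow> od3 w"
proof -
  assume "w \<in> Nset"
  then obtain x y z where w: "w = wadd x e8 @ wadd y e8 @ wadd z e8" and xyz: "x \<in> Bev" "y \<in> Bev" "z \<in> Bev"
    unfolding Nset_def by auto
  have l: "length x = 8" "length y = 8" "length z = 8" using xyz Bev_len by auto
  have ev: "even (wt x)" "even (wt y)" "even (wt z)" using xyz by (auto simp: Bev_def)
  have e8: "length e8 = 8" "wt e8 = 1" by (simp_all add: e8_def bw_def wt_def)
  show ?thesis unfolding od3_def w using l ev e8 by (simp add: blk_app even_wt_wadd)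
qed

lemma N_len: "w \<in> Nset \<Longrightarrow> length w = 24" using N_od3 od3_def by blast



definition band :: "bool list \<Rightarrow> bool list \<Rightarrow> bool list" where "band h u = map2 (\<and>) h u"

lemma band_len[simp]: "length (band h u) = min (length h) (length u)" by (simp add: band_def)
lemma band_app: "length h = length a \<Longrightarrow> band (h@h') (a@a') = band h a @ band h' a'"
  by (simp add: band_def)
lemma band_zero: "length a = n \<Longrightarrow> wt (band (replicate n False) a) = 0"
  by (simp add: wt_def band_def zip_replicate1 filter_empty_conv)
lemma band_ones: "length a = n \<Longrightarrow> band (replicate n True) a = a"
  by (rule nth_equalityI) (auto simp: band_def)
lemma band_wadd: "length h = n \<Longrightarrow> length a = n \<Longrightarrow> length b = n \<Longrightarrow>
   band h (wadd a b) = wadd (band h a) (band h b)"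
  by (rule nth_equalityI) (auto simp: band_def)
lemma toS_band: "length h = length u \<Longrightarrow> toS (band h u) = toS h \<inter> toS u"
  by (auto simp: toS_def band_def)

lemma HL_len: "h \<in> set HL \<Longrightarrow> length h = 8"
proof -
  have "list_all (\<lambda>h. length h = 8) HL" by code_simp
  then show "h \<in> set HL \<Longrightarrow> length h = 8" by (simp add: list_all_iff)
qed

lemma rep16: "replicate 16 False = replicate 8 False @ replicate 8 False" by code_simp

lemma HL24_alt: "set HL24 = {replicate 8 True @ replicate 8 False @ replicate 8 False,
   replicate 8 False @ replicate 8 True @ replicate 8 False} \<union> (\<lambda>h. replicate 8 False @ h @ h) ` set HL"
  unfolding HL24_def rep16 by auto

lemma C8_ker: "length z = 8 \<Longrightarrow> z \<in> C8 \<longleftrightarrow> (\<forall>h\<in>set HL. even (wt (band h z)))"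
proof -
  assume l: "length z = 8"
  have "z \<in> set (List.n_lists 8 [True, False])" using l by (auto simp: set_n_lists)
  then show ?thesis unfolding C8_eq CL_ker band_def by (auto simp: list_all_iff)
qed

lemma L_char: "u \<in> Lcode \<longleftrightarrow> length u = 24 \<and> (\<forall>h\<in>set HL24. even (wt (band h u)))"
proof
  assume "u \<in> Lcode"
  then obtain x y z where u: "u = x @ y @ wadd y z" and xyz: "x \<in> Bev" "y \<in> Bev" "z \<in> C8"
    unfolding L_alt by auto
  have l: "length x = 8" "length y = 8" "length z = 8" using xyz C8_props Bev_len by auto
  have ev: "even (wt x)" "even (wt y)" using xyz by (auto simp: Bev_def)
  have kz: "\<forall>h\<in>set HL. even (wt (band h z))" using C8_ker l xyz by blast
  have "even (wt (band h u))" if h: "h \<in> set HL24" for h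
  proof -
    consider "h = replicate 8 True @ replicate 8 False @ replicate 8 False"
      | "h = replicate 8 False @ replicate 8 True @ replicate 8 False"
      | g where "g \<in> set HL" "h = replicate 8 False @ g @ g"
      using h unfolding HL24_alt by blast
    then show ?thesis
    proof cases
      case 1 then show ?thesis using l ev by (simp add: u band_app band_ones band_zero)
    next
      case 2 then show ?thesis using l ev by (simp add: u band_app band_ones band_zero)
    next
      case 3
      have lg: "length g = 8" using 3 HL_len by blast
      have "band h u = band (replicate 8 False) x @ band g y @ wadd (band g y) (band g z)"
        using 3 l lg by (simp add: u band_app band_wadd)
      moreover have "even (wt (band g z))" using kz 3 by blast
      ultimately show ?thesis using l lg by (simp add: band_zero even_wt_wadd)
    qed
  qed
  then show "length u = 24 \<and> (\<forall>h\<in>set HL24. even (wt (band h u)))" using l u by simp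
next
  assume a: "length u = 24 \<and> (\<forall>h\<in>set HL24. even (wt (band h u)))"
  define x y w where "x = blk1 u" "y = blk2 u" "w = blk3 u"
  have u: "u = x @ y @ w" unfolding x_y_w_def by (rule blk_split)
  have l: "length x = 8" "length y = 8" "length w = 8" using blk_len a x_y_w_def by auto
  have r: "\<And>h. h \<in> set HL24 \<Longrightarrow> even (wt (band h u))" using a by blast
  have ex: "even (wt x)"
    using r[of "replicate 8 True @ replicate 8 False @ replicate 8 False"] l
    by (simp add: HL24_alt u band_app band_ones band_zero)
  have ey: "even (wt y)"
    using r[of "replicate 8 False @ replicate 8 True @ replicate 8 False"] l
    by (simp add: HL24_alt u band_app band_ones band_zero)
  define z where "z = wadd y w"
  have lz: "length z = 8" using l z_def by simp
  have "even (wt (band g z))" if g: "g \<in> set HL" for g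
  proof -
    have lg: "length g = 8" using g HL_len by blast
    have "even (wt (band (replicate 8 False @ g @ g) u))" using r g HL24_alt by blast
    then have "even (wt (band g y) + wt (band g w))" using l lg by (simp add: u band_app band_zero)
    then show ?thesis using l lg by (simp add: z_def band_wadd even_wt_wadd)
  qed
  then have "z \<in> C8" using C8_ker lz by blast
  moreover have "w = wadd y z" unfolding z_def using l by (simp add: wadd_cancel_left)
  ultimately show "u \<in> Lcode" unfolding L_alt using u ex ey l by (auto simp: Bev_def words_def)
qed



definition U :: "nat set" where "U = {0..<24}"
definition OmK :: "nat set set \<Rightarrow> nat set set" where "OmK K = {A. \<exists>k\<in>K. card (sd A k) = 1}"

lemma finU[simp]: "finite U" by (simp add: U_def)
lemma cardU[simp]: "card U = 24" by (simp add: U_def)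
lemma sd_swap: "sd a b = sd c d \<Longrightarrow> sd a c = sd b d"
  unfolding set_eq_iff sd_mem by blast

lemma sd_re1: "sd (sd (sd k A) E) k' = C \<Longrightarrow> sd k k' = sd (sd A E) C"
  unfolding set_eq_iff sd_mem by blast

lemma fin_sub: "A \<subseteq> U \<Longrightarrow> finite A" using finite_subset finU by blast

lemma card_odd_subsets: "card {A. A \<subseteq> U \<and> odd (card A)} = 2^23"
proof -
  let ?O = "{A. A \<subseteq> U \<and> odd (card A)}" and ?E = "{A. A \<subseteq> U \<and> even (card A)}"
  have z: "(0::nat) \<in> U" by (simp add: U_def)
  have b: "bij_betw (\<lambda>A. sd A {0}) ?E ?O"
  proof (rule bij_betw_imageI)
    show "inj_on (\<lambda>A. sd A {0}) ?E" by (rule inj_onI) (metis sd_cancel(2))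
    show "(\<lambda>A. sd A {0}) ` ?E = ?O"
    proof
      show "(\<lambda>A. sd A {0}) ` ?E \<subseteq> ?O" using z fin_sub by (auto simp: even_card_sd sd_mem)
      show "?O \<subseteq> (\<lambda>A. sd A {0}) ` ?E"
      proof
        fix A assume A: "A \<in> ?O"
        have "sd A {0} \<in> ?E" using A z fin_sub by (auto simp: even_card_sd sd_mem)
        moreover have "A = sd (sd A {0}) {0}" by simp
        ultimately show "A \<in> (\<lambda>A. sd A {0}) ` ?E" by blast
      qed
    qed
  qed
  have "Pow U = ?O \<union> ?E" by auto
  moreover have "?O \<inter> ?E = {}" by auto
  moreover have fO: "finite ?O" by (rule finite_subset[of _ "Pow U"]) auto
  moreover have fE: "finite ?E" by (rule finite_subset[of _ "Pow U"]) auto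
  ultimately have "card (Pow U) = card ?O + card ?E" using card_Un_disjoint by metis
  then have "card ?O + card ?E = 2^24" using card_Pow[OF finU] by simp
  moreover have "card ?E = card ?O" using b bij_betw_same_card by blast
  ultimately show ?thesis by simp
qed

lemma card_P13: "card {T. T \<subseteq> U \<and> (card T = 1 \<or> card T = 3)} = 2048"
proof -
  have "{T. T \<subseteq> U \<and> (card T = 1 \<or> card T = 3)} = {T. T \<subseteq> U \<and> card T = 1} \<union> {T. T \<subseteq> U \<and> card T = 3}"
    by auto
  moreover have "card ({T. T \<subseteq> U \<and> card T = 1} \<union> {T. T \<subseteq> U \<and> card T = 3}) =
     card {T. T \<subseteq> U \<and> card T = 1} + card {T. T \<subseteq> U \<and> card T = 3}"
    by (rule card_Un_disjoint) auto
  moreover have "card {T. T \<subseteq> U \<and> card T = 1} = 24" using n_subsets[OF finU, of 1] by simp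
  moreover have "(24::nat) choose 3 = 2024"
  proof -
    have "(24::nat) choose 3 = 24 * (23 choose 2) div 3"
      using binomial_Suc_Suc_eq_times[of 23 2] by simp
    also have "(23::nat) choose 2 = 253" by (simp add: choose_two)
    finally show ?thesis by simp
  qed
  then have "card {T. T \<subseteq> U \<and> card T = 3} = 2024" using n_subsets[OF finU, of 3] by simp
  ultimately show ?thesis by simp
qed

locale gcode =
  fixes K :: "nat set set"
  assumes Ksub: "\<And>k. k \<in> K \<Longrightarrow> k \<subseteq> U"
    and Kcl: "\<And>a b. a \<in> K \<Longrightarrow> b \<in> K \<Longrightarrow> sd a b \<in> K"
    and Kmin: "\<And>k. k \<in> K \<Longrightarrow> k \<noteq> {} \<Longrightarrow> 7 \<le> card k"
    and Kev: "\<And>k. k \<in> K \<Longrightarrow> even (card k)"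
    and Kcard: "card K = 4096"
begin

lemma Kfin: "finite K"
  using Kcard card.infinite by fastforce

lemma Kfin_el: "k \<in> K \<Longrightarrow> finite k" using Ksub fin_sub by blast

lemma close: "k \<in> K \<Longrightarrow> k' \<in> K \<Longrightarrow> sd k k' = X \<Longrightarrow> finite X \<Longrightarrow> card X \<le> 6 \<Longrightarrow> k = k'"
proof (rule ccontr)
  assume a: "k \<in> K" "k' \<in> K" "sd k k' = X" "finite X" "card X \<le> 6" "k \<noteq> k'"
  then have "X \<in> K" "X \<noteq> {}" using Kcl sd_eq_empty by auto
  then show False using Kmin a by fastforce
qed

lemma cover: assumes "W \<subseteq> U" "odd (card W)"
  shows "\<exists>k\<in>K. \<exists>T. T \<subseteq> U \<and> (card T = 1 \<or> card T = 3) \<and> W = sd k T"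
proof -
  let ?P = "{T. T \<subseteq> U \<and> (card T = 1 \<or> card T = 3)}" and ?O = "{A. A \<subseteq> U \<and> odd (card A)}"
  let ?f = "\<lambda>(k,T). sd k T"
  have inj: "inj_on ?f (K \<times> ?P)"
  proof (rule inj_onI, clarify)
    fix k T k' T' assume a: "k \<in> K" "k' \<in> K" "T \<subseteq> U" "T' \<subseteq> U" "card T = 1 \<or> card T = 3"
      "card T' = 1 \<or> card T' = 3" and e: "sd k T = sd k' T'"
    have s1: "sd k k' = sd T T'" using e by (rule sd_swap)
    have f: "finite T" "finite T'" using fin_sub a(3,4) by auto
    have "card T \<le> 3" "card T' \<le> 3" using a(5,6) by auto
    then have s2: "card (sd T T') \<le> 6" using card_sd_le[OF f] by linarith
    have s3: "finite (sd T T')" using sd_finite[OF f] .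
    have kk: "k = k'" by (rule close[OF a(1) a(2) s1 s3 s2])
    have "T = sd k (sd k T)" by simp
    also have "\<dots> = sd k' (sd k' T')" using e kk by simp
    also have "\<dots> = T'" by simp
    finally show "k = k' \<and> T = T'" using kk by simp
  qed
  have sub: "?f ` (K \<times> ?P) \<subseteq> ?O"
  proof clarify
    fix k T assume a: "k \<in> K" "T \<subseteq> U" "card T = 1 \<or> card T = 3"
    show "sd k T \<subseteq> U \<and> odd (card (sd k T))"
      using a Ksub[of k] Kev[of k] fin_sub even_card_sd[of k T] by (auto simp: sd_mem)
  qed
  have "card (?f ` (K \<times> ?P)) = card (K \<times> ?P)" using inj by (rule card_image)
  also have "\<dots> = 2^23" using Kcard card_P13 by (simp add: card_cartesian_product)
  finally have "?f ` (K \<times> ?P) = ?O" using card_subset_eq[OF _ sub] card_odd_subsets by simp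
  then have "W \<in> ?f ` (K \<times> ?P)" using assms by blast
  then obtain p where p: "p \<in> K \<times> ?P" "W = ?f p" by (rule imageE) simp
  obtain k T where "p = (k,T)" by (cases p)
  then show ?thesis using p by auto
qed


lemma count_in: assumes "W \<subseteq> U" "W \<in> OmK K"
  shows "card {E. E \<subseteq> U \<and> card E = 2 \<and> sd W E \<in> OmK K} = 23"
proof -
  obtain k where k: "k \<in> K" "card (sd W k) = 1" using assms(2) unfolding OmK_def by blast
  obtain a where a: "sd W k = {a}" using k(2) by (rule card_1_singletonE)
  have aU: "a \<in> U" using a assms(1) Ksub[OF k(1)] unfolding sd_def by blast
  have "W = sd (sd W k) k" by simp
  then have Wk: "W = sd k {a}" using a sd_comm by simp
  have eq: "{E. E \<subseteq> U \<and> card E = 2 \<and> sd W E \<in> OmK K} = (\<lambda>b. {a,b}) ` (U - {a})"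
  proof (rule set_eqI, rule iffI)
    fix E assume "E \<in> {E. E \<subseteq> U \<and> card E = 2 \<and> sd W E \<in> OmK K}"
    then have E: "E \<subseteq> U" "card E = 2" and "sd W E \<in> OmK K" by auto
    then obtain k' where k': "k' \<in> K" "card (sd (sd W E) k') = 1" unfolding OmK_def by blast
    obtain c where c: "sd (sd W E) k' = {c}" using k'(2) by (rule card_1_singletonE)
    have e1: "sd k k' = sd (sd {a} E) {c}" using c unfolding Wk by (rule sd_re1)
    have fE: "finite E" using E fin_sub by blast
    have "card (sd {a} E) \<le> 3" using card_sd_le[of "{a}" E] fE E by simp
    then have c4: "card (sd (sd {a} E) {c}) \<le> 6" using card_sd_le[of "sd {a} E" "{c}"] fE sd_finite by fastforce
    have kk: "k = k'" by (rule close[OF k(1) k'(1) e1 _ c4]) (simp add: fE sd_finite)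
    then have "sd (sd {a} E) {c} = {}" using e1 by simp
    then have "sd {a} E = {c}" by (simp add: sd_eq_empty)
    then have Ea: "E = sd {a} {c}" by (metis sd_cancel(1))
    have ca: "c \<noteq> a" using Ea E(2) by auto
    then have "E = {a, c}" using Ea by (auto simp: sd_def)
    moreover have "c \<in> U" using \<open>E = {a,c}\<close> E(1) by blast
    ultimately show "E \<in> (\<lambda>b. {a,b}) ` (U - {a})" using ca by blast
  next
    fix E assume "E \<in> (\<lambda>b. {a,b}) ` (U - {a})"
    then obtain b where b: "b \<in> U" "b \<noteq> a" "E = {a,b}" by auto
    have "sd W E = sd k {b}" unfolding Wk b(3) using b(2) by (auto simp: sd_def)
    then have "sd (sd W E) k = {b}" by (metis sd_cancel(2) sd_comm)
    then have "sd W E \<in> OmK K" unfolding OmK_def using k(1) by (intro CollectI bexI[where x=k]) simp_all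
    moreover have "E \<subseteq> U" "card E = 2" using b aU by auto
    ultimately show "E \<in> {E. E \<subseteq> U \<and> card E = 2 \<and> sd W E \<in> OmK K}" by blast
  qed
  have "inj_on (\<lambda>b. {a,b}) (U - {a})" by (rule inj_onI) (auto simp: doubleton_eq_iff)
  then have "card ((\<lambda>b. {a,b}) ` (U - {a})) = card (U - {a})" by (rule card_image)
  also have "\<dots> = 23" using aU by simp
  finally show ?thesis using eq by simp
qed

lemma count_out: assumes "W \<subseteq> U" "odd (card W)" "W \<notin> OmK K"
  shows "card {E. E \<subseteq> U \<and> card E = 2 \<and> sd W E \<in> OmK K} = 3"
proof -
  obtain k T where k: "k \<in> K" "T \<subseteq> U" "card T = 1 \<or> card T = 3" "W = sd k T"
    using cover[OF assms(1,2)] by blast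
  have swk: "sd W k = T" using k(4) by (metis sd_cancel(2) sd_comm)
  have T3: "card T = 3"
  proof (rule ccontr)
    assume "card T \<noteq> 3"
    then have "card (sd W k) = 1" using k(3) swk by simp
    then show False using assms(3) k(1) unfolding OmK_def by blast
  qed
  have fT: "finite T" using k(2) fin_sub by blast
  have eq: "{E. E \<subseteq> U \<and> card E = 2 \<and> sd W E \<in> OmK K} = {E. E \<subseteq> T \<and> card E = 2}"
  proof (rule set_eqI, rule iffI)
    fix E assume "E \<in> {E. E \<subseteq> U \<and> card E = 2 \<and> sd W E \<in> OmK K}"
    then have E: "E \<subseteq> U" "card E = 2" and "sd W E \<in> OmK K" by auto
    then obtain k' where k': "k' \<in> K" "card (sd (sd W E) k') = 1" unfolding OmK_def by blast
    obtain c where c: "sd (sd W E) k' = {c}" using k'(2) by (rule card_1_singletonE)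
    have e1: "sd k k' = sd (sd T E) {c}" using c unfolding k(4) by (rule sd_re1)
    have fE: "finite E" using E fin_sub by blast
    have "card (sd T E) \<le> 5" using card_sd_le[of T E] fE fT E T3 by simp
    then have c4: "card (sd (sd T E) {c}) \<le> 6" using card_sd_le[of "sd T E" "{c}"] fE fT sd_finite by fastforce
    have kk: "k = k'" by (rule close[OF k(1) k'(1) e1 _ c4]) (simp add: fE fT sd_finite)
    then have "sd (sd T E) {c} = {}" using e1 by simp
    then have "sd T E = {c}" by (simp add: sd_eq_empty)
    then have Ea: "E = sd T {c}" by (metis sd_cancel(1))
    have cT: "c \<in> T"
    proof (rule ccontr)
      assume "c \<notin> T"
      then have "E = insert c T" using Ea by (auto simp: sd_def)
      then have "card E = 4" using \<open>c \<notin> T\<close> fT T3 by simp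
      then show False using E(2) by simp
    qed
    then have "E \<subseteq> T" using Ea by (auto simp: sd_def)
    then show "E \<in> {E. E \<subseteq> T \<and> card E = 2}" using E(2) by blast
  next
    fix E assume "E \<in> {E. E \<subseteq> T \<and> card E = 2}"
    then have E: "E \<subseteq> T" "card E = 2" by auto
    have "sd W E = sd k (T - E)" unfolding k(4) using E(1) by (auto simp: sd_def)
    then have "sd (sd W E) k = T - E" by (metis sd_cancel(2) sd_comm)
    moreover have "card (T - E) = 1" using E fT T3 by (simp add: card_Diff_subset finite_subset)
    ultimately have "sd W E \<in> OmK K" unfolding OmK_def using k(1) by (intro CollectI bexI[where x=k]) simp_all
    moreover have "E \<subseteq> U" using E k(2) by blast
    ultimately show "E \<in> {E. E \<subseteq> U \<and> card E = 2 \<and> sd W E \<in> OmK K}" using E by blast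
  qed
  have "card {E. E \<subseteq> T \<and> card E = 2} = 3" using n_subsets[OF fT, of 2] T3 by (simp add: choose_two)
  then show ?thesis using eq by simp
qed

lemma golay_count: assumes "W \<subseteq> U" "odd (card W)"
  shows "card {E. E \<subseteq> U \<and> card E = 2 \<and> sd W E \<in> OmK K} = (if W \<in> OmK K then 23 else 3)"
  using count_in count_out assms by auto

end



definition LS :: "nat set set" where "LS = {A. A \<subseteq> U \<and> (\<forall>h\<in>set HL24. even (card (toS h \<inter> A)))}"
definition sv :: "nat set \<Rightarrow> bool list" where "sv A = map (\<lambda>h. even (card (toS h \<inter> A))) HL24"

lemma HL24_len: "h \<in> set HL24 \<Longrightarrow> length h = 24"
proof -
  have "list_all (\<lambda>h. length h = 24) HL24" by code_simp
  then show "h \<in> set HL24 \<Longrightarrow> length h = 24" by (simp add: list_all_iff)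
qed
lemma HL24_length: "length HL24 = 6" by code_simp

lemma LS_fromS: assumes "A \<subseteq> U" shows "fromS 24 A \<in> Lcode \<longleftrightarrow> A \<in> LS"
proof -
  have tA: "toS (fromS 24 A) = A" using assms by (simp add: toS_fromS' U_def)
  have "\<And>h. h \<in> set HL24 \<Longrightarrow> wt (band h (fromS 24 A)) = card (toS h \<inter> A)"
    using HL24_len by (simp add: wt_toS toS_band tA)
  then show ?thesis unfolding L_char LS_def using assms by auto
qed

lemma sd_LS: assumes "R \<subseteq> U" "E \<subseteq> U" shows "sd R E \<in> LS \<longleftrightarrow> sv R = sv E"
proof -
  have fR: "finite R" and fE: "finite E" using assms fin_sub by auto
  have "\<And>h. toS h \<inter> sd R E = sd (toS h \<inter> R) (toS h \<inter> E)" by (auto simp: sd_def)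
  then have "\<And>h. even (card (toS h \<inter> sd R E)) \<longleftrightarrow> (even (card (toS h \<inter> R)) \<longleftrightarrow> even (card (toS h \<inter> E)))"
    using fR fE by (simp add: even_card_sd)
  moreover have "sd R E \<subseteq> U" using assms by (auto simp: sd_def)
  ultimately show ?thesis unfolding LS_def sv_def map_eq_conv by auto
qed

lemma map_true: "map f xs = replicate (length xs) True \<longleftrightarrow> (\<forall>x\<in>set xs. f x)"
  by (induction xs) auto

lemma LS_sv: assumes "R \<subseteq> U" shows "R \<in> LS \<longleftrightarrow> sv R = replicate 6 True"
proof -
  have "sv R = replicate 6 True \<longleftrightarrow> (\<forall>h\<in>set HL24. even (card (toS h \<inter> R)))"
    using map_true[of "\<lambda>h. even (card (toS h \<inter> R))" HL24] unfolding sv_def HL24_length .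
  then show ?thesis unfolding LS_def using assms by blast
qed

lemma pairs_set: "set pairs = {(a,b). a < b \<and> b < 24}"
proof -
  have "set pairs = (\<Union>a\<in>{0..<24}. Pair a ` {Suc a..<24})" unfolding pairs_def by (simp del: upt_Suc)
  then show ?thesis by (auto simp: image_iff)
qed
fun incr :: "nat list \<Rightarrow> bool" where
  "incr (x # y # zs) = (x < y \<and> incr (y # zs))"
| "incr _ = True"

lemma incr_sorted: "incr xs \<Longrightarrow> sorted_wrt (<) xs"
  by (induction xs rule: incr.induct) auto

lemma pairs_dist: "distinct pairs"
proof -
  have "incr (map (\<lambda>p. 24 * fst p + snd p) pairs)" by code_simp
  then have "distinct (map (\<lambda>p. 24 * fst p + snd p) pairs)"
    using incr_sorted strict_sorted_iff by blast
  then show ?thesis by (simp add: distinct_map)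
qed

lemma even_pair: assumes "a \<noteq> b" "a < length h" "b < length h"
  shows "even (card (toS h \<inter> {a,b})) = (h!a = h!b)"
proof (cases "h!a"; cases "h!b")
  assume "h!a" "h!b" then have "toS h \<inter> {a,b} = {a,b}" using assms by (auto simp: toS_def)
  then show ?thesis using assms \<open>h!a\<close> \<open>h!b\<close> by simp
next
  assume "h!a" "\<not> h!b" then have "toS h \<inter> {a,b} = {a}" using assms by (auto simp: toS_def)
  then show ?thesis using \<open>h!a\<close> \<open>\<not> h!b\<close> by simp
next
  assume "\<not> h!a" "h!b" then have "toS h \<inter> {a,b} = {b}" using assms by (auto simp: toS_def)
  then show ?thesis using \<open>\<not> h!a\<close> \<open>h!b\<close> by simp
next
  assume "\<not> h!a" "\<not> h!b" then have "toS h \<inter> {a,b} = {}" using assms by (auto simp: toS_def)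
  then show ?thesis using \<open>\<not> h!a\<close> \<open>\<not> h!b\<close> by simp
qed

lemma sv_pair: "a < b \<Longrightarrow> b < 24 \<Longrightarrow> sv {a,b} = spair a b"
  unfolding sv_def spair_def map_eq_conv using HL24_len even_pair by simp

lemma two_subsets: "{E. E \<subseteq> U \<and> card E = 2 \<and> P E} = (\<lambda>p. {fst p, snd p}) ` {p \<in> set pairs. P {fst p, snd p}}"
proof (rule set_eqI, rule iffI)
  fix E assume "E \<in> {E. E \<subseteq> U \<and> card E = 2 \<and> P E}"
  then have E: "E \<subseteq> U" "card E = 2" "P E" by auto
  then obtain x y where xy: "E = {x,y}" "x \<noteq> y" using card_2_iff by metis
  have U: "x < 24" "y < 24" using E(1) xy by (auto simp: U_def)
  show "E \<in> (\<lambda>p. {fst p, snd p}) ` {p \<in> set pairs. P {fst p, snd p}}"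
  proof (cases "x < y")
    case True
    then show ?thesis using xy U E(3) unfolding pairs_set by (intro image_eqI[where x="(x,y)"]) auto
  next
    case False
    then have "y < x" using xy by simp
    then show ?thesis using xy U E(3) unfolding pairs_set by (intro image_eqI[where x="(y,x)"]) (auto simp: insert_commute)
  qed
next
  fix E assume "E \<in> (\<lambda>p. {fst p, snd p}) ` {p \<in> set pairs. P {fst p, snd p}}"
  then obtain a b where ab: "a < b" "b < 24" "E = {a,b}" "P E" unfolding pairs_set by auto
  then show "E \<in> {E. E \<subseteq> U \<and> card E = 2 \<and> P E}" by (auto simp: U_def)
qed

lemma inj_pairs: "inj_on (\<lambda>p. {fst p, snd p}) (set pairs)"
proof (rule inj_onI)
  fix p q assume p: "p \<in> set pairs" and q: "q \<in> set pairs" and e: "{fst p, snd p} = {fst q, snd q}"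
  have "fst p < snd p" "fst q < snd q" using p q unfolding pairs_set by auto
  then show "p = q" using e by (auto simp: doubleton_eq_iff prod_eq_iff)
qed

lemma count_sv: "card {E. E \<subseteq> U \<and> card E = 2 \<and> sv E = t} = length (filter (\<lambda>s. s = t) SL)"
proof -
  have "card {E. E \<subseteq> U \<and> card E = 2 \<and> sv E = t} = card {p \<in> set pairs. sv {fst p, snd p} = t}"
    unfolding two_subsets by (rule card_image) (rule inj_on_subset[OF inj_pairs], auto)
  also have "{p \<in> set pairs. sv {fst p, snd p} = t} = set (filter (\<lambda>p. spair (fst p) (snd p) = t) pairs)"
  proof -
    have "\<forall>p\<in>set pairs. sv {fst p, snd p} = spair (fst p) (snd p)" using sv_pair pairs_set by auto
    then show ?thesis by auto
  qed
  also have "card \<dots> = length (filter (\<lambda>p. spair (fst p) (snd p) = t) pairs)"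
    by (rule distinct_card[OF distinct_filter[OF pairs_dist]])
  also have "\<dots> = length (filter (\<lambda>s. s = t) (map (\<lambda>p. spair (fst p) (snd p)) pairs))"
    by (simp add: filter_map comp_def)
  finally show ?thesis using SL_eq by simp
qed

lemma row0: "toS (HL24 ! 0) = {0..<8}"
proof -
  have "HL24 ! 0 = replicate 8 True @ replicate 16 False" by code_simp
  then show ?thesis by (auto simp: toS_def nth_append)
qed
lemma row2: "toS (HL24 ! 2) = {8..<24}"
proof -
  have "HL24 ! 2 = replicate 8 False @ replicate 16 True" by code_simp
  then show ?thesis by (auto simp: toS_def nth_append)
qed

lemma L_count: assumes "R \<subseteq> U" "even (card R)"
  shows "card {E. E \<subseteq> U \<and> card E = 2 \<and> sd R E \<in> LS} = (if R \<in> LS then 28 else 8)"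
proof -
  have "{E. E \<subseteq> U \<and> card E = 2 \<and> sd R E \<in> LS} = {E. E \<subseteq> U \<and> card E = 2 \<and> sv E = sv R}"
    using sd_LS[OF assms(1)] by auto
  then have c: "card {E. E \<subseteq> U \<and> card E = 2 \<and> sd R E \<in> LS} = length (filter (\<lambda>s. s = sv R) SL)"
    using count_sv by simp
  have lsv: "length (sv R) = 6" by (simp add: sv_def HL24_length)
  then have "sv R \<in> set (List.n_lists 6 [True, False])" by (auto simp: set_n_lists)
  then have tab: "length (filter (\<lambda>s. s = sv R) SL) =
     (if sv R = replicate 6 True then 28 else if sv R ! 2 = sv R ! 0 then 8 else 0)"
    using SL_table by (simp add: list_all_iff)
  have s0: "sv R ! 0 = even (card ({0..<8} \<inter> R))" using row0 HL24_length by (simp add: sv_def)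
  have s2: "sv R ! 2 = even (card ({8..<24} \<inter> R))" using row2 HL24_length by (simp add: sv_def)
  have fR: "finite R" using assms fin_sub by blast
  have "R = ({0..<8} \<inter> R) \<union> ({8..<24} \<inter> R)" using assms(1) by (auto simp: U_def)
  moreover have "({0..<8} \<inter> R) \<inter> ({8..<24} \<inter> R) = {}" by auto
  moreover have "finite ({0..<8} \<inter> R)" "finite ({8..<24} \<inter> R)" using fR by auto
  ultimately have "card R = card ({0..<8} \<inter> R) + card ({8..<24} \<inter> R)"
    using card_Un_disjoint by metis
  then have "sv R ! 2 = sv R ! 0" using s0 s2 assms(2) by auto
  then show ?thesis using c tab LS_sv[OF assms(1)] by simp
qed



lemma toS_U: "length w = 24 \<Longrightarrow> toS w \<subseteq> U" using toS_sub[of w] by (simp add: U_def)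

lemma HV_props: "v \<in> HV \<Longrightarrow> length v = 24 \<and> odd (card (toS v))"
  by (simp add: HV_def words_def wt_toS)

lemma sd_sub_U: "A \<subseteq> U \<Longrightarrow> B \<subseteq> U \<Longrightarrow> sd A B \<subseteq> U" by (rule sd_sub)

lemma nb_transfer: assumes "v \<in> HV"
  shows "card {u \<in> HV. Hadj v u \<and> P u} = card {E. E \<subseteq> U \<and> card E = 2 \<and> P (fromS 24 (sd (toS v) E))}"
proof -
  define V where "V = toS v"
  have lv: "length v = 24" and oV: "odd (card V)" using HV_props[OF assms] V_def by auto
  have VU: "V \<subseteq> U" using toS_U[OF lv] V_def by simp
  let ?A = "{E. E \<subseteq> U \<and> card E = 2 \<and> P (fromS 24 (sd V E))}"
  let ?B = "{u \<in> HV. Hadj v u \<and> P u}"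
  let ?g = "\<lambda>E. fromS 24 (sd V E)"
  have tg: "\<And>E. E \<subseteq> U \<Longrightarrow> toS (?g E) = sd V E"
    using VU by (intro toS_fromS') (auto simp: U_def sd_def)
  have inj: "inj_on ?g ?A"
  proof (rule inj_onI)
    fix E E' assume "E \<in> ?A" "E' \<in> ?A" "?g E = ?g E'"
    then have "sd V E = sd V E'" using tg by (metis (no_types, lifting) mem_Collect_eq)
    then show "E = E'" by (metis sd_cancel(1))
  qed
  have img: "?g ` ?A = ?B"
  proof
    show "?g ` ?A \<subseteq> ?B"
    proof clarify
      fix E assume E: "E \<subseteq> U" "card E = 2" "P (fromS 24 (sd V E))"
      have fE: "finite E" using E fin_sub by blast
      have fV: "finite V" using VU fin_sub by blast
      have t: "toS (?g E) = sd V E" using tg E by blast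
      have "odd (wt (?g E))" unfolding wt_toS t using even_card_sd[OF fV fE] oV E by simp
      then have "?g E \<in> HV" by (simp add: HV_def words_def)
      moreover have "hdist v (?g E) = 2" using lv E by (simp add: hdist_toS t V_def[symmetric])
      ultimately show "?g E \<in> HV \<and> Hadj v (?g E) \<and> P (?g E)" using E by (simp add: Hadj_def)
    qed
    show "?B \<subseteq> ?g ` ?A"
    proof
      fix u assume u: "u \<in> ?B"
      have lu: "length u = 24" using u HV_props by blast
      define E where "E = sd V (toS u)"
      have EU: "E \<subseteq> U" unfolding E_def using VU toS_U[OF lu] by (rule sd_sub)
      have cE: "card E = 2" using u lu lv by (simp add: Hadj_def hdist_toS E_def V_def)
      have gE: "?g E = u" unfolding E_def using fromS_toS[of u] lu by simp
      show "u \<in> ?g ` ?A" using EU cE gE u by (intro image_eqI[where x=E]) auto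
    qed
  qed
  have "card ?B = card ?A" using card_image[OF inj] img by simp
  then show ?thesis using V_def by simp
qed

definition KF :: "nat set set" where "KF = toS ` Fgolay"

lemma KF_gcode: "gcode KF"
proof
  fix k assume "k \<in> KF"
  then obtain f where f: "f \<in> Fgolay" "k = toS f" unfolding KF_def by blast
  have lf: "length f = 24" using F_len f by blast
  show "k \<subseteq> U" using f lf toS_U by simp
  show "even (card k)" using f F_wt by (simp add: wt_toS[symmetric])
  assume "k \<noteq> {}"
  then have "f \<noteq> replicate 24 False" using f by auto
  then have "8 \<le> wt f" using F_wt f by blast
  then show "7 \<le> card k" using f by (simp add: wt_toS)
next
  fix a b assume "a \<in> KF" "b \<in> KF"
  then obtain f g where f: "f \<in> Fgolay" "a = toS f" and g: "g \<in> Fgolay" "b = toS g" unfolding KF_def by blast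
  have "sd a b = toS (wadd f g)" using f g F_len by (simp add: toS_wadd)
  then show "sd a b \<in> KF" unfolding KF_def using F_closed f g by blast
next
  have "inj_on toS Fgolay" using F_len toS_inj by (metis inj_onI)
  then show "card KF = 4096" unfolding KF_def using F_card by (simp add: card_image)
qed

interpretation KFc: gcode KF by (rule KF_gcode)

lemma Omega_mem: assumes "d \<in> Dcode" "A \<subseteq> U"
  shows "fromS 24 A \<in> Omega (transl Fgolay d) \<longleftrightarrow> sd A (toS d) \<in> OmK KF"
proof -
  have ld: "length d = 24" using D_len assms by blast
  have tA: "toS (fromS 24 A) = A" using assms by (simp add: toS_fromS' U_def)
  have "\<And>f. f \<in> Fgolay \<Longrightarrow> hdist (fromS 24 A) (wadd f d) = card (sd (sd A (toS d)) (toS f))"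
  proof -
    fix f assume "f \<in> Fgolay"
    then have lf: "length f = 24" using F_len by blast
    have "sd A (sd (toS f) (toS d)) = sd (sd A (toS d)) (toS f)" unfolding set_eq_iff sd_mem by blast
    then show "hdist (fromS 24 A) (wadd f d) = card (sd (sd A (toS d)) (toS f))"
      using lf ld by (simp add: hdist_toS toS_wadd tA)
  qed
  then show ?thesis unfolding Omega_def OmK_def transl_def KF_def by (auto simp: words_def)
qed

lemma coset_eq: assumes "\<And>a b. a \<in> K \<Longrightarrow> b \<in> K \<Longrightarrow> wadd a b \<in> K" "\<And>a. a \<in> K \<Longrightarrow> length a = 24"
  "length d1 = 24" "length d2 = 24" "wadd d1 d2 \<in> K"
  shows "transl K d1 = transl K d2"
proof -
  have "transl K d1 \<subseteq> transl K d2" if c: "wadd d1 d2 \<in> K" "length d1 = 24" "length d2 = 24" for d1 d2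
  proof
    fix y assume "y \<in> transl K d1"
    then obtain f where f: "f \<in> K" "y = wadd f d1" unfolding transl_def by blast
    have lf: "length f = 24" using assms(2) f by blast
    have "y = wadd (wadd f (wadd d1 d2)) d2"
      using f lf c by (simp add: wadd_assoc wadd_cancel_left)
    moreover have "wadd f (wadd d1 d2) \<in> K" using assms(1) f c by blast
    ultimately show "y \<in> transl K d2" unfolding transl_def by blast
  qed
  moreover have "wadd d2 d1 \<in> K" using assms(5) wadd_comm by metis
  ultimately show ?thesis using assms by blast
qed


lemma Lcos_mem: assumes "w \<in> Nset" "A \<subseteq> U"
  shows "fromS 24 A \<in> transl Lcode w \<longleftrightarrow> sd A (toS w) \<in> LS"
proof -
  have lw: "length w = 24" using N_len assms by blast
  let ?u = "fromS 24 A"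
  have "?u \<in> transl Lcode w \<longleftrightarrow> wadd ?u w \<in> Lcode"
  proof
    assume "?u \<in> transl Lcode w"
    then obtain l where l: "l \<in> Lcode" "?u = wadd l w" unfolding transl_def by blast
    have "wadd ?u w = l" using l L_len lw by (simp add: wadd_assoc)
    then show "wadd ?u w \<in> Lcode" using l by simp
  next
    assume a: "wadd ?u w \<in> Lcode"
    have "wadd (wadd ?u w) w = ?u" using lw by (simp add: wadd_assoc)
    then show "?u \<in> transl Lcode w" unfolding transl_def using a by (metis image_eqI)
  qed
  moreover have sU: "sd A (toS w) \<subseteq> U" using assms(2) toS_U[OF lw] by (rule sd_sub)
  moreover have "wadd ?u w = fromS 24 (sd A (toS w))"
  proof (rule toS_inj)
    show "length (wadd ?u w) = length (fromS 24 (sd A (toS w)))" using lw by simp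
    have "toS ?u = A" using assms by (simp add: toS_fromS' U_def)
    then show "toS (wadd ?u w) = toS (fromS 24 (sd A (toS w)))"
      using lw sU by (simp add: toS_wadd toS_fromS' U_def)
  qed
  ultimately show ?thesis using LS_fromS by simp
qed

lemma hdist_wt: "length a = length b \<Longrightarrow> hdist a b = wt (wadd a b)"
  by (simp add: hdist_toS wt_toS toS_wadd)

lemma swap4: "length a = n \<Longrightarrow> length b = n \<Longrightarrow> length c = n \<Longrightarrow> length e = n \<Longrightarrow>
  wadd a b = wadd c e \<Longrightarrow> wadd b e = wadd a c"
proof -
  assume l: "length a = n" "length b = n" "length c = n" "length e = n" and eq: "wadd a b = wadd c e"
  have "\<And>i. i < n \<Longrightarrow> (a!i \<noteq> b!i) = (c!i \<noteq> e!i)"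
    using eq l by (metis wadd_nth)
  then show ?thesis using l by (intro nth_equalityI) auto
qed

lemma tri: "length u = n \<Longrightarrow> length x = n \<Longrightarrow> length y = n \<Longrightarrow> wadd x y = wadd (wadd u x) (wadd u y)"
  by (rule nth_equalityI) auto

lemma Dis1: assumes "X \<in> F_cosets" "Y \<in> F_cosets" "u \<in> Omega X" "u \<in> Omega Y" shows "X = Y"
proof -
  obtain d1 d2 where d: "d1 \<in> Dcode" "X = transl Fgolay d1" "d2 \<in> Dcode" "Y = transl Fgolay d2"
    using assms(1,2) unfolding F_cosets_def by blast
  obtain f1 where f1: "f1 \<in> Fgolay" "hdist u (wadd f1 d1) = 1" and lu: "length u = 24"
    using assms(3) d(2) unfolding Omega_def transl_def words_def by blast
  obtain f2 where f2: "f2 \<in> Fgolay" "hdist u (wadd f2 d2) = 1"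
    using assms(4) d(4) unfolding Omega_def transl_def words_def by blast
  have l: "length f1 = 24" "length f2 = 24" "length d1 = 24" "length d2 = 24"
    using f1 f2 d F_len D_len by auto
  let ?x1 = "wadd f1 d1" and ?x2 = "wadd f2 d2"
  have xD: "?x1 \<in> Dcode" "?x2 \<in> Dcode" using f1 f2 d F_sub_D D_closed by auto
  have w1: "wt (wadd u ?x1) = 1" "wt (wadd u ?x2) = 1" using f1 f2 l lu by (simp_all add: hdist_wt)
  have "wadd ?x1 ?x2 = wadd (wadd u ?x1) (wadd u ?x2)" using l lu by (intro tri) simp_all
  then have "wt (wadd ?x1 ?x2) \<le> 2" using wt_wadd_le[of "wadd u ?x1" "wadd u ?x2"] w1 l lu by simp
  then have "wadd ?x1 ?x2 = replicate 24 False" using D_small D_closed[OF xD] by blast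
  then have "?x1 = ?x2" using wadd_eq_zero[of ?x1 ?x2] l by simp
  then have "wadd d1 d2 = wadd f1 f2" by (rule swap4[OF l(1) l(3) l(2) l(4)])
  then have "wadd d1 d2 \<in> Fgolay" using F_closed f1 f2 by simp
  then show ?thesis using d coset_eq[of Fgolay d1 d2] F_closed F_len l by blast
qed

lemma Dis3: assumes "X \<in> L_cosets" "Y \<in> L_cosets" "u \<in> X" "u \<in> Y" shows "X = Y"
proof -
  obtain w1 w2 where w: "w1 \<in> Nset" "X = transl Lcode w1" "w2 \<in> Nset" "Y = transl Lcode w2"
    using assms(1,2) unfolding L_cosets_def by blast
  obtain l1 where l1: "l1 \<in> Lcode" "u = wadd l1 w1" using assms(3) w(2) unfolding transl_def by blast
  obtain l2 where l2: "l2 \<in> Lcode" "u = wadd l2 w2" using assms(4) w(4) unfolding transl_def by blast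
  have l: "length l1 = 24" "length l2 = 24" "length w1 = 24" "length w2 = 24"
    using l1 l2 w L_len N_len by auto
  have "wadd l1 w1 = wadd l2 w2" using l1(2) l2(2) by simp
  then have "wadd w1 w2 = wadd l1 l2" by (rule swap4[OF l(1) l(3) l(2) l(4)])
  then have "wadd w1 w2 \<in> Lcode" using L_closed l1 l2 by simp
  then show ?thesis using w coset_eq[of Lcode w1 w2] L_closed L_len l by blast
qed

lemma Dis2: assumes "X \<in> F_cosets" "Y \<in> L_cosets" "u \<in> Omega X" "u \<in> Y" shows False
proof -
  obtain d where d: "d \<in> Dcode" "X = transl Fgolay d" using assms(1) unfolding F_cosets_def by blast
  obtain w where w: "w \<in> Nset" "Y = transl Lcode w" using assms(2) unfolding L_cosets_def by blast
  obtain f where f: "f \<in> Fgolay" "hdist u (wadd f d) = 1" and lu: "length u = 24"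
    using assms(3) d(2) unfolding Omega_def transl_def words_def by blast
  obtain l where l: "l \<in> Lcode" "u = wadd l w" using assms(4) w(2) unfolding transl_def by blast
  have xD: "wadd f d \<in> Dcode" using f d F_sub_D D_closed by auto
  have ls: "length (wadd f d) = 24" "length l = 24" "length w = 24"
    by (rule D_len[OF xD], rule L_len[OF l(1)], rule N_len[OF w(1)])
  have "od3 (wadd (wadd l (wadd f d)) w)"
    using ev3_od3[OF ev3_ev3[OF L_ev3[OF l(1)] D_ev3[OF xD]] N_od3[OF w(1)]] .
  moreover have "wadd (wadd l (wadd f d)) w = wadd u (wadd f d)"
    unfolding l(2) by (simp add: wadd_assoc wadd_comm[of w])
  ultimately have "3 \<le> wt (wadd u (wadd f d))" using od3_wt by simp
  moreover have "wt (wadd u (wadd f d)) = 1" using f ls lu by (simp add: hdist_wt)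
  ultimately show False by simp
qed

lemma ev3_even: "ev3 u \<Longrightarrow> even (wt u)"
  unfolding ev3_def by (subst blk_split) simp
lemma od3_odd: "od3 u \<Longrightarrow> odd (wt u)"
  unfolding od3_def by (subst blk_split) simp

lemma cntF: assumes "v \<in> HV" "X \<in> F_cosets"
  shows "card {u \<in> HV. Hadj v u \<and> u \<in> Omega X} = (if v \<in> Omega X then 23 else 3)"
proof -
  obtain d where d: "d \<in> Dcode" "X = transl Fgolay d" using assms(2) unfolding F_cosets_def by blast
  define V where "V = toS v"
  define D where "D = toS d"
  have lv: "length v = 24" and oV: "odd (card V)" using HV_props[OF assms(1)] V_def by auto
  have ld: "length d = 24" using D_len d by blast
  have VU: "V \<subseteq> U" and DU: "D \<subseteq> U" using toS_U lv ld V_def D_def by auto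
  have eD: "even (card D)" using ev3_even[OF D_ev3[OF d(1)]] D_def by (simp add: wt_toS)
  have "card {u \<in> HV. Hadj v u \<and> u \<in> Omega X} = card {E. E \<subseteq> U \<and> card E = 2 \<and> fromS 24 (sd V E) \<in> Omega X}"
    using nb_transfer[OF assms(1)] V_def by simp
  also have "{E. E \<subseteq> U \<and> card E = 2 \<and> fromS 24 (sd V E) \<in> Omega X} = {E. E \<subseteq> U \<and> card E = 2 \<and> sd (sd V D) E \<in> OmK KF}"
  proof -
    have "\<And>E. E \<subseteq> U \<Longrightarrow> fromS 24 (sd V E) \<in> Omega X \<longleftrightarrow> sd (sd V D) E \<in> OmK KF"
    proof -
      fix E assume "E \<subseteq> U"
      then have "sd V E \<subseteq> U" using VU by (intro sd_sub)
      moreover have "sd (sd V E) D = sd (sd V D) E" unfolding set_eq_iff sd_mem by blast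
      ultimately show "fromS 24 (sd V E) \<in> Omega X \<longleftrightarrow> sd (sd V D) E \<in> OmK KF"
        using Omega_mem[OF d(1)] d(2) D_def by simp
    qed
    then show ?thesis by blast
  qed
  also have "card \<dots> = (if sd V D \<in> OmK KF then 23 else 3)"
  proof (rule KFc.golay_count)
    show "sd V D \<subseteq> U" using VU DU by (rule sd_sub)
    show "odd (card (sd V D))" using oV eD even_card_sd[of V D] VU DU fin_sub by auto
  qed
  also have "sd V D \<in> OmK KF \<longleftrightarrow> v \<in> Omega X"
    using Omega_mem[OF d(1) VU] d(2) D_def V_def fromS_toS[of v] lv by simp
  finally show ?thesis .
qed

lemma cntL: assumes "v \<in> HV" "Y \<in> L_cosets"
  shows "card {u \<in> HV. Hadj v u \<and> u \<in> Y} = (if v \<in> Y then 28 else 8)"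
proof -
  obtain w where w: "w \<in> Nset" "Y = transl Lcode w" using assms(2) unfolding L_cosets_def by blast
  define V where "V = toS v"
  define D where "D = toS w"
  have lv: "length v = 24" and oV: "odd (card V)" using HV_props[OF assms(1)] V_def by auto
  have ld: "length w = 24" using N_len w by blast
  have VU: "V \<subseteq> U" and DU: "D \<subseteq> U" using toS_U lv ld V_def D_def by auto
  have oD: "odd (card D)" using od3_odd[OF N_od3[OF w(1)]] D_def by (simp add: wt_toS)
  have "card {u \<in> HV. Hadj v u \<and> u \<in> Y} = card {E. E \<subseteq> U \<and> card E = 2 \<and> fromS 24 (sd V E) \<in> Y}"
    using nb_transfer[OF assms(1)] V_def by simp
  also have "{E. E \<subseteq> U \<and> card E = 2 \<and> fromS 24 (sd V E) \<in> Y} = {E. E \<subseteq> U \<and> card E = 2 \<and> sd (sd V D) E \<in> LS}"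
  proof -
    have "\<And>E. E \<subseteq> U \<Longrightarrow> fromS 24 (sd V E) \<in> Y \<longleftrightarrow> sd (sd V D) E \<in> LS"
    proof -
      fix E assume "E \<subseteq> U"
      then have "sd V E \<subseteq> U" using VU by (intro sd_sub)
      moreover have "sd (sd V E) D = sd (sd V D) E" unfolding set_eq_iff sd_mem by blast
      ultimately show "fromS 24 (sd V E) \<in> Y \<longleftrightarrow> sd (sd V D) E \<in> LS"
        using Lcos_mem[OF w(1)] w(2) D_def by simp
    qed
    then show ?thesis by blast
  qed
  also have "card \<dots> = (if sd V D \<in> LS then 28 else 8)"
  proof (rule L_count)
    show "sd V D \<subseteq> U" using VU DU by (rule sd_sub)
    show "even (card (sd V D))" using oV oD even_card_sd[of V D] VU DU fin_sub by auto
  qed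
  also have "sd V D \<in> LS \<longleftrightarrow> v \<in> Y"
    using Lcos_mem[OF w(1) VU] w(2) D_def V_def fromS_toS[of v] lv by simp
  finally show ?thesis .
qed



lemma sum_one: assumes "finite S" "\<And>X Y. X \<in> S \<Longrightarrow> Y \<in> S \<Longrightarrow> P X \<Longrightarrow> P Y \<Longrightarrow> X = Y" "b \<le> (a::nat)"
  shows "(\<Sum>X\<in>S. if P X then a else b) = b * card S + (if \<exists>X\<in>S. P X then a - b else 0)"
proof (cases "\<exists>X\<in>S. P X")
  case True
  then obtain X0 where X0: "X0 \<in> S" "P X0" by blast
  have "(\<Sum>X\<in>S. if P X then a else b) = (if P X0 then a else b) + (\<Sum>X\<in>S - {X0}. if P X then a else b)"
    using assms(1) X0(1) by (rule sum.remove)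
  also have "(\<Sum>X\<in>S - {X0}. if P X then a else b) = (\<Sum>X\<in>S - {X0}. b)"
  proof (rule sum.cong[OF refl])
    fix X assume X: "X \<in> S - {X0}"
    then have "\<not> P X" using assms(2)[of X X0] X0 by blast
    then show "(if P X then a else b) = b" by simp
  qed
  also have "\<dots> = b * (card S - 1)" using assms(1) X0(1) by simp
  finally have "(\<Sum>X\<in>S. if P X then a else b) = a + b * (card S - 1)" using X0 by simp
  moreover have "S \<noteq> {}" using X0 by blast
  then have "0 < card S" using assms(1) by (simp add: card_gt_0_iff)
  then obtain n where n: "card S = Suc n" using gr0_conv_Suc by blast
  have "b * card S + (a - b) = a + b * (card S - 1)" unfolding n using assms(3) by simp
  ultimately show ?thesis using True by simp
next
  case False
  then have "(\<Sum>X\<in>S. if P X then a else b) = (\<Sum>X\<in>S. b)" by (intro sum.cong refl) simp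
  then show ?thesis using False by simp
qed

lemma finite_F_cosets: "finite F_cosets"
proof -
  have "Dcode \<subseteq> words 24" using D_len by (auto simp: words_def)
  then have "finite Dcode" using words_finite finite_subset by blast
  then show ?thesis unfolding F_cosets_def by simp
qed

lemma finite_L_cosets: "finite L_cosets"
proof -
  have "Nset \<subseteq> words 24" using N_len by (auto simp: words_def)
  then have "finite Nset" using words_finite finite_subset by blast
  then show ?thesis unfolding L_cosets_def by simp
qed

lemma finHV: "finite HV" using words_finite[of 24] by (auto simp: HV_def intro: finite_subset)

lemma nb_total: assumes "v \<in> HV" shows "card {u \<in> HV. Hadj v u} = 276"
proof -
  have "card {u \<in> HV. Hadj v u \<and> True} = card {E. E \<subseteq> U \<and> card E = 2 \<and> True}"
    by (rule nb_transfer[OF assms])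
  also have "\<dots> = 24 choose 2" using n_subsets[OF finU, of 2] by simp
  also have "\<dots> = 276" by (simp add: choose_two)
  finally show ?thesis by simp
qed

theorem lemma6:
  fixes i j :: nat and S T :: "bool list set set"
  assumes "i \<le> 64" and "j \<le> 8" and "0 < i + j" and "i + j < 72"
    and "S \<subseteq> F_cosets" and "card S = i"
    and "T \<subseteq> L_cosets" and "card T = j"
  shows "perfect_coloring HV Hadj ((\<Union>X\<in>S. Omega X) \<union> \<Union>T)
           (20 + 3*i + 8*j) (256 - 3*i - 8*j) (3*i + 8*j) (276 - 3*i - 8*j)"
proof -
  let ?C = "(\<Union>X\<in>S. Omega X) \<union> \<Union>T"
  have finS: "finite S" using assms(5) finite_F_cosets finite_subset by blast
  have finT: "finite T" using assms(7) finite_L_cosets finite_subset by blast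
  have key: "card {u \<in> HV. Hadj v u \<and> u \<in> ?C} = 3*i + 8*j + (if v \<in> ?C then 20 else 0)"
    if v: "v \<in> HV" for v
  proof -
    let ?N = "\<lambda>Q. {u \<in> HV. Hadj v u \<and> u \<in> Q}"
    have fN: "\<And>Q. finite (?N Q)" using finHV by simp
    have split: "?N ?C = (\<Union>X\<in>S. ?N (Omega X)) \<union> (\<Union>Y\<in>T. ?N Y)" by blast
    have disj: "(\<Union>X\<in>S. ?N (Omega X)) \<inter> (\<Union>Y\<in>T. ?N Y) = {}"
      using Dis2 assms(5,7) by blast
    have cS: "card (\<Union>X\<in>S. ?N (Omega X)) = (\<Sum>X\<in>S. card (?N (Omega X)))"
    proof (rule card_UN_disjoint[OF finS])
      show "\<forall>X\<in>S. finite (?N (Omega X))" using fN by blast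
      show "\<forall>X\<in>S. \<forall>Y\<in>S. X \<noteq> Y \<longrightarrow> ?N (Omega X) \<inter> ?N (Omega Y) = {}"
        using Dis1 assms(5) by blast
    qed
    have cT: "card (\<Union>Y\<in>T. ?N Y) = (\<Sum>Y\<in>T. card (?N Y))"
    proof (rule card_UN_disjoint[OF finT])
      show "\<forall>Y\<in>T. finite (?N Y)" using fN by blast
      show "\<forall>X\<in>T. \<forall>Y\<in>T. X \<noteq> Y \<longrightarrow> ?N X \<inter> ?N Y = {}"
        using Dis3 assms(7) by blast
    qed
    have sS: "(\<Sum>X\<in>S. card (?N (Omega X))) = (\<Sum>X\<in>S. if v \<in> Omega X then 23 else 3)"
      using cntF[OF v] assms(5) by (intro sum.cong) auto
    have sT: "(\<Sum>Y\<in>T. card (?N Y)) = (\<Sum>Y\<in>T. if v \<in> Y then 28 else 8)"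
      using cntL[OF v] assms(7) by (intro sum.cong) auto
    have sS2: "(\<Sum>X\<in>S. if v \<in> Omega X then 23 else 3) = 3 * i + (if \<exists>X\<in>S. v \<in> Omega X then 20 else 0)"
    proof -
      have h: "\<And>X Y. X \<in> S \<Longrightarrow> Y \<in> S \<Longrightarrow> v \<in> Omega X \<Longrightarrow> v \<in> Omega Y \<Longrightarrow> X = Y"
        using Dis1 assms(5) by blast
      show ?thesis using sum_one[OF finS h, where a=23 and b=3] assms(6) by simp
    qed
    have sT2: "(\<Sum>Y\<in>T. if v \<in> Y then 28 else 8) = 8 * j + (if \<exists>Y\<in>T. v \<in> Y then 20 else 0)"
    proof -
      have h: "\<And>X Y. X \<in> T \<Longrightarrow> Y \<in> T \<Longrightarrow> v \<in> X \<Longrightarrow> v \<in> Y \<Longrightarrow> X = Y"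
        using Dis3 assms(7) by blast
      show ?thesis using sum_one[OF finT h, where a=28 and b=8] assms(8) by simp
    qed
    have nb: "\<not> ((\<exists>X\<in>S. v \<in> Omega X) \<and> (\<exists>Y\<in>T. v \<in> Y))" using Dis2 assms(5,7) by blast
    have "card (?N ?C) = card (\<Union>X\<in>S. ?N (Omega X)) + card (\<Union>Y\<in>T. ?N Y)"
      unfolding split by (rule card_Un_disjoint) (use disj finS finT fN in auto)
    also have "\<dots> = 3 * i + (if \<exists>X\<in>S. v \<in> Omega X then 20 else 0) + (8 * j + (if \<exists>Y\<in>T. v \<in> Y then 20 else 0))"
      using cS cT sS sT sS2 sT2 by simp
    finally show ?thesis using nb by auto
  qed
  have comp: "card {u \<in> HV. Hadj v u \<and> u \<notin> ?C} = 276 - card {u \<in> HV. Hadj v u \<and> u \<in> ?C}"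
    if v: "v \<in> HV" for v
  proof -
    have "{u \<in> HV. Hadj v u} = {u \<in> HV. Hadj v u \<and> u \<in> ?C} \<union> {u \<in> HV. Hadj v u \<and> u \<notin> ?C}" by blast
    moreover have "card ({u \<in> HV. Hadj v u \<and> u \<in> ?C} \<union> {u \<in> HV. Hadj v u \<and> u \<notin> ?C}) =
       card {u \<in> HV. Hadj v u \<and> u \<in> ?C} + card {u \<in> HV. Hadj v u \<and> u \<notin> ?C}"
      by (rule card_Un_disjoint) (use finHV in auto)
    ultimately show ?thesis using nb_total[OF v] by simp
  qed
  have ij: "3*i + 8*j \<le> 256" using assms(1,2) by simp
  show ?thesis unfolding perfect_coloring_def
  proof (intro conjI ballI)
    fix v assume "v \<in> HV \<inter> ?C"
    then have v: "v \<in> HV" "v \<in> ?C" by auto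
    show "card {u \<in> HV. Hadj v u \<and> u \<in> ?C} = 20 + 3*i + 8*j" using key[OF v(1)] v(2) by simp
    show "card {u \<in> HV. Hadj v u \<and> u \<notin> ?C} = 256 - 3*i - 8*j" using comp[OF v(1)] key[OF v(1)] v(2) ij by simp
  next
    fix v assume "v \<in> HV - ?C"
    then have v: "v \<in> HV" "v \<notin> ?C" by auto
    show "card {u \<in> HV. Hadj v u \<and> u \<in> ?C} = 3*i + 8*j" using key[OF v(1)] v(2) by simp
    show "card {u \<in> HV. Hadj v u \<and> u \<notin> ?C} = 276 - 3*i - 8*j" using comp[OF v(1)] key[OF v(1)] v(2) by simp
  qed
qed


end
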